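(* Let $Y_\star\in\mathcal{M}_4\cap\mathrm{Sym}(\mathbb{R}^{n\times n})$ be a stationary point of the rank-4 ODE \[ \dot Y=-P_YR_\varepsilon(E)+\langle P_YR_\varepsilon(E),E\rangle Y,\qquad E=\Pi_{\mathcal{S}}Y . \] Assume the following: - $E_\star=\Pi_{\mathcal{S}}Y_\star\in\mathcal{E}_1$; - $\lambda_k$ and $\lambda_{k+1}$ of $L(W+\varepsilon E_\star)$ are simple; - $R_\varepsilon(E_\star)$ has rank 4; - $P_{Y_\star}R_\varepsilon(E_\star)\neq0$. Then there exist $\delta_\star>0$ and a constant $C>0$ such that for every symmetric $\hat Y\in\mathcal{M}_4$ with $\|\hat Y-Y_\star\|_F=\delta<\delta_\star$ and $\hat E=\Pi_{\mathcal{S}}\hat Y\in\mathcal{E}_1$, one has \[ \|P_{\hat Y}R_\varepsilon(\hat E)-R_\varepsilon(\hat E)\|_F\le C\delta^2 . \]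
   Context: Let $\mathscr{E}\subseteq\{1,\dots,n\}^2$ be a symmetric edge set, and let $W\in\mathbb{R}^{n\times n}$ be symmetric, entrywise non-negative, with $w_{ij}=0$ for $(i,j)\notin\mathscr{E}$. Let $L(A)=\mathrm{diag}(A\mathbb{1})-A$ with $\mathbb{1}=(1,\dots,1)^T$. Eigenvalues are ordered $\lambda_1\le\dots\le\lambda_n$. The inner product is $\langle X,Y\rangle=\mathrm{trace}(X^TY)$ and $\|\cdot\|_F$ is the Frobenius norm. Let $\mathcal{S}=\{A: a_{ij}=0\ \forall (i,j)\notin\mathscr{E}\}$, with orthogonal projection $\Pi_{\mathcal{S}}$ (zeroing the entries outside $\mathscr{E}$). Let $\mathcal{E}=\mathcal{S}\cap\mathrm{Sym}(\mathbb{R}^{n\times n})$ and $\mathcal{E}_1=\{E\in\mathcal{E}:\|E\|_F=1\}$. Fix $k\in\{2,\dots,n-1\}$ and $\varepsilon>0$. For $E\in\mathcal{E}$ with $\lambda_k,\lambda_{k+1}$ of $L(W+\varepsilon E)$ simple, let $x$ and $y$ be unit eigenvectors for $\lambda_{k+1}$ and $\lambda_k$ respectively. Set $z=x\bullet x-y\bullet y$ (componentwise product) and $R_\varepsilon(E)=\tfrac12(z\mathbb{1}^T+\mathbb{1}z^T)-xx^T+yy^T$. $\mathcal{M}_4$ is the manifold of real $n\times n$ matrices of rank exactly 4. $P_Y$ is the orthogonal projection onto $T_Y\mathcal{M}_4$. For symmetric $Y=USU^T$, with $U\in\mathbb{R}^{n\times4}$ having orthonormal columns and $S$ symmetric invertible,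 it is $P_YA=A-(I_n-UU^T)A(I_n-UU^T)$. A stationary point is a zero of the right-hand side of the ODE. *)

theory Defs
  imports "HOL-Analysis.Analysis" "HOL-Library.Multiset"
begin

text \<open>All matrices are n x n real matrices, n = CARD('n); indices are the elements of the finite type 'n.\<close>

type_synonym 'n mat = "real^'n^'n"

definition symm :: "'n::finite mat \<Rightarrow> bool" where
  "symm A \<longleftrightarrow> transpose A = A"

text \<open>Frobenius inner product and norm: <X,Y> = trace(X^T Y).\<close>
definition frob_inner :: "'n::finite mat \<Rightarrow> 'n mat \<Rightarrow> real" where
  "frob_inner X Y = trace (transpose X ** Y)"

definition frob_norm :: "'n::finite mat \<Rightarrow> real" where
  "frob_norm X = sqrt (frob_inner X X)"

text \<open>Graph Laplacian L(A) = diag(A 1) - A.\<close>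
definition laplacian :: "'n::finite mat \<Rightarrow> 'n mat" where
  "laplacian A = (\<chi> i j. if i = j then (\<Sum>l\<in>UNIV. A$i$l) else 0) - A"

text \<open>Eigenvalues counted with multiplicity (dimension of the eigenspace; for symmetric
  matrices this equals the algebraic multiplicity), sorted increasingly; lam A j is the
  j-th one, 1-indexed: lam A 1 \<le> ... \<le> lam A n.\<close>
definition eigenspace :: "'n::finite mat \<Rightarrow> real \<Rightarrow> (real^'n) set" where
  "eigenspace A \<mu> = {v. A *v v = \<mu> *\<^sub>R v}"

definition eig_mset :: "'n::finite mat \<Rightarrow> real multiset" where
  "eig_mset A = (\<Sum>\<mu>\<in>{\<mu>. \<exists>v. v \<noteq> 0 \<and> A *v v = \<mu> *\<^sub>R v}.
                    replicate_mset (dim (eigenspace A \<mu>)) \<mu>)"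

definition lam :: "'n::finite mat \<Rightarrow> nat \<Rightarrow> real" where
  "lam A j = sorted_list_of_multiset (eig_mset A) ! (j - 1)"

definition simple_eig :: "'n::finite mat \<Rightarrow> nat \<Rightarrow> bool" where
  "simple_eig A j \<longleftrightarrow> count (eig_mset A) (lam A j) = 1"

text \<open>Projection onto the sparsity pattern S (zero entries outside the edge set).\<close>
definition PiS :: "('n \<times> 'n) set \<Rightarrow> 'n::finite mat \<Rightarrow> 'n mat" where
  "PiS Es A = (\<chi> i j. if (i, j) \<in> Es then A$i$j else 0)"

definition inS :: "('n \<times> 'n) set \<Rightarrow> 'n::finite mat \<Rightarrow> bool" where
  "inS Es A \<longleftrightarrow> (\<forall>i j. (i, j) \<notin> Es \<longrightarrow> A$i$j = 0)"

text \<open>calE_1 = {E in S, E symmetric, ||E||_F = 1}.\<close>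
definition calE1 :: "('n \<times> 'n) set \<Rightarrow> 'n::finite mat set" where
  "calE1 Es = {E. inS Es E \<and> symm E \<and> frob_norm E = 1}"

text \<open>R_eps(E): x, y unit eigenvectors of L(W + eps E) for lambda_{k+1}, lambda_k
  (well defined up to sign when these eigenvalues are simple).\<close>
definition Rmat :: "nat \<Rightarrow> 'n::finite mat \<Rightarrow> real \<Rightarrow> 'n mat \<Rightarrow> 'n mat" where
  "Rmat k W \<epsilon> E =
     (let A = laplacian (W + \<epsilon> *\<^sub>R E);
          x = (SOME x::real^'n. norm x = 1 \<and> A *v x = lam A (k + 1) *\<^sub>R x);
          y = (SOME y::real^'n. norm y = 1 \<and> A *v y = lam A k *\<^sub>R y);
          z = (\<chi> i. x$i * x$i - y$i * y$i)
      in (\<chi> i j. (z$i + z$j) / 2 - x$i * x$j + y$i * y$j))"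

text \<open>Tangent-space projection P_Y for symmetric Y = U S U^T of rank 4,
  U with 4 orthonormal columns, S symmetric invertible:
  P_Y A = A - (I - U U^T) A (I - U U^T).\<close>
definition PY :: "'n::finite mat \<Rightarrow> 'n mat \<Rightarrow> 'n mat" where
  "PY Y A =
     (let U = (SOME U::real^4^'n. transpose U ** U = mat 1 \<and>
                 (\<exists>S::real^4^4. transpose S = S \<and> invertible S \<and> Y = U ** S ** transpose U));
          Q = mat 1 - U ** transpose U
      in A - Q ** A ** Q)"

text \<open>Right-hand side of the rank-4 ODE at Y, with E = Pi_S Y.\<close>
definition ode_rhs :: "('n \<times> 'n) set \<Rightarrow> nat \<Rightarrow> 'n::finite mat \<Rightarrow> real \<Rightarrow> 'n mat \<Rightarrow> 'n mat" where
  "ode_rhs Es k W \<epsilon> Y =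
     (let E = PiS Es Y; G = PY Y (Rmat k W \<epsilon> E)
      in - G + frob_inner G E *\<^sub>R Y)"

end

theory Submission
  imports Defs
begin

(* ---- Sp ---- *)


lemma sym_dot: fixes A :: "real^'n::finite^'n"
  assumes "transpose A = A" shows "(A *v u) \<bullet> w = u \<bullet> (A *v w)"
proof -
  have "A *v u = u v* A" using transpose_matrix_vector[of A u] assms by simp
  thus ?thesis by (simp add: dot_lmul_matrix)
qed

lemma quad_zero_lemma:
  fixes a c :: real assumes "\<forall>t. 2*t*a \<le> t^2 * c" shows "a = 0"
proof -
  define d where "d = \<bar>c\<bar> + 1"
  have d: "d > 0" "c \<le> d - 1" unfolding d_def by auto
  define t where "t = a / d"
  have h: "2*t*a \<le> t^2*c" using assms by blast
  have "t^2 * c \<le> t^2 * (d - 1)" using d by (simp add: mult_left_mono)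
  hence "2*t*a \<le> t^2*(d-1)" using h by linarith
  hence "2*t*a*d^2 \<le> t^2*(d-1)*d^2" using d by (simp add: mult_right_mono)
  moreover have "2*t*a*d^2 = 2*a*a*d" unfolding t_def using d by (simp add: power2_eq_square field_simps)
  moreover have "t^2*(d-1)*d^2 = a*a*(d-1)" unfolding t_def using d by (simp add: power2_eq_square field_simps)
  ultimately have "2*a*a*d \<le> a*a*(d-1)" by simp
  hence "a*a*(d+1) \<le> 0" by (simp add: algebra_simps)
  moreover have "a*a*(d+1) \<ge> 0" using d by simp
  ultimately have "a*a*(d+1) = 0" by linarith
  thus ?thesis using d by simp
qed


(* ---- Sp2 ---- *)


lemma quad_expand: fixes A :: "real^'n::finite^'n"
  assumes sym: "transpose A = A"
  shows "(v + t *\<^sub>R w) \<bullet> (A *v (v + t *\<^sub>R w)) = v \<bullet> (A *v v) + 2*t*(v \<bullet> (A *v w)) + t^2 * (w \<bullet> (A *v w))"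
proof -
  have "w \<bullet> (A *v v) = v \<bullet> (A *v w)" using sym_dot[OF sym, of w v] by (simp add: inner_commute)
  thus ?thesis by (simp add: matrix_vector_right_distrib inner_add_left inner_add_right
       matrix_vector_mult_scaleR algebra_simps power2_eq_square)
qed

lemma spectral_aux:
  fixes A :: "real^'n::finite^'n"
  assumes sym: "transpose A = A"
  shows "subspace S \<Longrightarrow> (\<forall>x\<in>S. A *v x \<in> S) \<Longrightarrow> \<exists>B. B \<subseteq> S \<and> pairwise orthogonal B \<and>
     (\<forall>b\<in>B. norm b = 1 \<and> A *v b = (b \<bullet> (A *v b)) *\<^sub>R b) \<and> span B = S"
proof (induction "dim S" arbitrary: S rule: less_induct)
  case less
  show ?case
  proof (cases "S = {0}")
    case True then show ?thesis by (intro exI[of _ "{}"]) auto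
  next
    case False
    define K where "K = S \<inter> sphere 0 1"
    have cK: "compact K" unfolding K_def
      by (intro closed_Int_compact closed_subspace less.prems compact_sphere)
    obtain x where x: "x \<in> S" "x \<noteq> 0" using False less.prems(1) subspace_0 by blast
    have "(1/norm x) *\<^sub>R x \<in> K" unfolding K_def using x less.prems(1)
      by (simp add: subspace_scale)
    hence Kne: "K \<noteq> {}" by blast
    have cont: "continuous_on K (\<lambda>v. v \<bullet> (A *v v))"
      by (intro continuous_intros matrix_vector_mult_linear_continuous_on)
    obtain v where v: "v \<in> K" and vmax: "\<forall>u\<in>K. u \<bullet> (A *v u) \<le> v \<bullet> (A *v v)"
      using continuous_attains_sup[OF cK Kne cont] by blast
    define q where "q = v \<bullet> (A *v v)"
    have vS: "v \<in> S" and vn: "norm v = 1" using v unfolding K_def by auto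
    have vv: "v \<bullet> v = 1" using vn by (simp add: norm_eq_1)
    have key: "v \<bullet> (A *v w) = 0" if wS: "w \<in> S" and wv: "v \<bullet> w = 0" for w
    proof (rule quad_zero_lemma[where c = "q * (w \<bullet> w) - w \<bullet> (A *v w)"], intro allI)
      fix t :: real
      define p where "p = v + t *\<^sub>R w"
      have pS: "p \<in> S" unfolding p_def using vS wS less.prems(1) by (simp add: subspace_add subspace_scale)
      have pp: "p \<bullet> p = 1 + t^2 * (w \<bullet> w)" unfolding p_def using vv wv
        by (simp add: inner_add_left inner_add_right inner_commute power2_eq_square)
      have ppos: "p \<bullet> p > 0" using pp by (simp add: add_pos_nonneg)
      have np: "norm p > 0" using ppos using inner_gt_zero_iff zero_less_norm_iff by blast
      have "(1/norm p) *\<^sub>R p \<in> K" unfolding K_def using pS np less.prems(1)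
        by (simp add: subspace_scale)
      hence "((1/norm p) *\<^sub>R p) \<bullet> (A *v ((1/norm p) *\<^sub>R p)) \<le> q" using vmax q_def by blast
      hence "(1/norm p)^2 * (p \<bullet> (A *v p)) \<le> q"
        by (simp add: matrix_vector_mult_scaleR power2_eq_square)
      hence "p \<bullet> (A *v p) \<le> q * (norm p)^2" using np
        by (simp add: field_simps power2_eq_square)
      hence "p \<bullet> (A *v p) \<le> q * (p \<bullet> p)" by (simp add: power2_norm_eq_inner)
      hence "q + 2*t*(v \<bullet> (A *v w)) + t^2 * (w \<bullet> (A *v w)) \<le> q * (1 + t^2 * (w \<bullet> w))"
        unfolding pp using quad_expand[OF sym, of v t w] unfolding p_def q_def by simp
      thus "2 * t * (v \<bullet> (A *v w)) \<le> t^2 * (q * (w \<bullet> w) - w \<bullet> (A *v w))"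
        by (simp add: algebra_simps)
    qed
    have Av: "A *v v = q *\<^sub>R v"
    proof -
      define w where "w = A *v v - q *\<^sub>R v"
      have wS: "w \<in> S" unfolding w_def using vS less.prems by (simp add: subspace_diff subspace_scale)
      have "v \<bullet> w = 0" unfolding w_def q_def using vv by (simp add: inner_diff_right)
      hence "v \<bullet> (A *v w) = 0" using key wS by blast
      hence "(A *v v) \<bullet> w = 0" using sym_dot[OF sym] by simp
      hence "(w + q *\<^sub>R v) \<bullet> w = 0" unfolding w_def by simp
      hence "w \<bullet> w = 0" using \<open>v \<bullet> w = 0\<close> by (simp add: inner_add_left)
      thus ?thesis unfolding w_def by simp
    qed
    define S' where "S' = {y \<in> S. v \<bullet> y = 0}"
    have subS': "subspace S'" unfolding S'_def using less.prems(1)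
      by (auto simp: subspace_def inner_add_right)
    have invS': "\<forall>y\<in>S'. A *v y \<in> S'"
    proof
      fix y assume "y \<in> S'"
      hence "y \<in> S" "v \<bullet> y = 0" unfolding S'_def by auto
      moreover have "v \<bullet> (A *v y) = (A *v v) \<bullet> y" using sym_dot[OF sym] by simp
      ultimately show "A *v y \<in> S'" unfolding S'_def using less.prems(2) Av by simp
    qed
    have "S' \<subset> S" unfolding S'_def using vS vv by (metis (mono_tags, lifting) mem_Collect_eq psubsetI subsetI zero_neq_one)
    hence "span S' \<subset> span S" using span_eq_iff subS' less.prems(1) by metis
    hence "dim S' < dim S" by (rule dim_psubset)
    then obtain B' where B': "B' \<subseteq> S'" "pairwise orthogonal B'"
      "\<forall>b\<in>B'. norm b = 1 \<and> A *v b = (b \<bullet> (A *v b)) *\<^sub>R b" "span B' = S'"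
      using less.hyps[OF _ subS' invS'] by blast
    show ?thesis
    proof (intro exI[of _ "insert v B'"] conjI)
      show "insert v B' \<subseteq> S" using B'(1) vS unfolding S'_def by auto
      have "v \<notin> B'" using B'(1) vv unfolding S'_def by auto
      thus "pairwise orthogonal (insert v B')" using B'(1,2) unfolding S'_def
        by (auto simp: pairwise_insert orthogonal_def inner_commute)
      show "\<forall>b\<in>insert v B'. norm b = 1 \<and> A *v b = (b \<bullet> (A *v b)) *\<^sub>R b"
        using B'(3) vn Av q_def by auto
      show "span (insert v B') = S"
      proof
        show "span (insert v B') \<subseteq> S"
          using \<open>insert v B' \<subseteq> S\<close> less.prems(1) by (simp add: span_minimal)
        show "S \<subseteq> span (insert v B')"
        proof
          fix y assume yS: "y \<in> S"
          have "y - (v \<bullet> y) *\<^sub>R v \<in> S'" unfolding S'_def using yS vS vv less.prems(1)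
            by (simp add: subspace_diff subspace_scale inner_diff_right)
          thus "y \<in> span (insert v B')" using B'(4) span_breakdown_eq by blast
        qed
      qed
    qed
  qed
qed

lemma spectral:
  fixes A :: "real^'n::finite^'n"
  assumes sym: "transpose A = A"
  obtains B where "pairwise orthogonal B" "\<And>b. b\<in>B \<Longrightarrow> norm b = 1"
    "\<And>b. b\<in>B \<Longrightarrow> A *v b = (b \<bullet> (A *v b)) *\<^sub>R b" "span B = UNIV"
    "finite B" "card B = CARD('n)"
proof -
  obtain B where B: "pairwise orthogonal B" "\<forall>b\<in>B. norm b = 1 \<and> A *v b = (b \<bullet> (A *v b)) *\<^sub>R b" "span B = UNIV"
    using spectral_aux[OF sym, of UNIV] by auto
  have ind: "independent B" using B(1,2) by (intro pairwise_orthogonal_independent) auto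
  hence fin: "finite B" using independent_imp_finite by blast
  have "card B = dim (UNIV :: (real^'n) set)" using ind B(3)
    by (metis dim_span dim_eq_card_independent)
  hence "card B = CARD('n)" by simp
  thus ?thesis using that B fin by auto
qed


(* ---- Eb ---- *)


locale eigb =
  fixes A :: "real^'n::finite^'n" and B :: "(real^'n) set"
  assumes symA: "transpose A = A"
    and orth: "pairwise orthogonal B"
    and unit: "\<And>b. b\<in>B \<Longrightarrow> norm b = 1"
    and eig: "\<And>b. b\<in>B \<Longrightarrow> A *v b = (b \<bullet> (A *v b)) *\<^sub>R b"
    and spanB: "span B = UNIV"
    and fin: "finite B"
    and cardB: "card B = CARD('n)"
begin

definition ev where "ev b = b \<bullet> (A *v b)"

lemma eig_ev: "b \<in> B \<Longrightarrow> A *v b = ev b *\<^sub>R b"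
  using eig unfolding ev_def by blast

lemma bb: "b \<in> B \<Longrightarrow> b \<bullet> b = 1" using unit by (simp add: norm_eq_1)

lemma borth: "b \<in> B \<Longrightarrow> b' \<in> B \<Longrightarrow> b \<noteq> b' \<Longrightarrow> b \<bullet> b' = 0"
  using orth unfolding pairwise_def orthogonal_def by blast

lemma coef: assumes "b' \<in> B" shows "(\<Sum>b\<in>B. c b *\<^sub>R b) \<bullet> b' = c b'"
proof -
  have "(\<Sum>b\<in>B. c b *\<^sub>R b) \<bullet> b' = (\<Sum>b\<in>B. c b * (b \<bullet> b'))" by (simp add: inner_sum_left)
  also have "\<dots> = (\<Sum>b\<in>B. if b = b' then c b' else 0)"
    by (rule sum.cong) (use assms bb borth in auto)
  also have "\<dots> = c b'" using assms fin by simp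
  finally show ?thesis .
qed

lemma expand: "(\<Sum>b\<in>B. (x \<bullet> b) *\<^sub>R b) = x"
  by (rule orthonormal_basis_expand) (use orth unit spanB fin in auto)

lemma nsq_sum: "(\<Sum>b\<in>B. c b *\<^sub>R b) \<bullet> (\<Sum>b\<in>B. c b *\<^sub>R b) = (\<Sum>b\<in>B. (c b)^2)"
proof -
  have "(\<Sum>b\<in>B. c b *\<^sub>R b) \<bullet> (\<Sum>b\<in>B. c b *\<^sub>R b) = (\<Sum>b'\<in>B. c b' * ((\<Sum>b\<in>B. c b *\<^sub>R b) \<bullet> b'))"
    by (simp add: inner_sum_right)
  also have "\<dots> = (\<Sum>b\<in>B. (c b)^2)" by (rule sum.cong) (auto simp: coef power2_eq_square)
  finally show ?thesis .
qed

lemma Ax_exp: "A *v x = (\<Sum>b\<in>B. (ev b * (x \<bullet> b)) *\<^sub>R b)"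
proof -
  have "A *v x = A *v (\<Sum>b\<in>B. (x \<bullet> b) *\<^sub>R b)" using expand by simp
  also have "\<dots> = (\<Sum>b\<in>B. (x \<bullet> b) *\<^sub>R (A *v b))"
    by (simp add: vec.sum matrix_vector_mult_scaleR)
  also have "\<dots> = (\<Sum>b\<in>B. (ev b * (x \<bullet> b)) *\<^sub>R b)"
    by (rule sum.cong) (auto simp: eig_ev mult.commute)
  finally show ?thesis .
qed

lemma xx: "x \<bullet> x = (\<Sum>b\<in>B. (x \<bullet> b)^2)"
  using nsq_sum[of "\<lambda>b. x \<bullet> b"] expand by simp

lemma xAx: "x \<bullet> (A *v x) = (\<Sum>b\<in>B. ev b * (x \<bullet> b)^2)"
proof -
  have "x \<bullet> (A *v x) = (\<Sum>b\<in>B. ev b * (x \<bullet> b) * (x \<bullet> b))"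
    unfolding Ax_exp by (simp add: inner_sum_right)
  thus ?thesis by (simp add: power2_eq_square mult.assoc)
qed

lemma shift_sq: "(A *v x - l *\<^sub>R x) \<bullet> (A *v x - l *\<^sub>R x) = (\<Sum>b\<in>B. (ev b - l)^2 * (x \<bullet> b)^2)"
proof -
  have "A *v x - l *\<^sub>R x = (\<Sum>b\<in>B. ((ev b - l) * (x \<bullet> b)) *\<^sub>R b)"
  proof -
    have "l *\<^sub>R x = (\<Sum>b\<in>B. (l * (x \<bullet> b)) *\<^sub>R b)"
      using expand[of x] by (metis (no_types, lifting) scaleR_right.sum scaleR_scaleR sum.cong)
    thus ?thesis unfolding Ax_exp by (simp add: sum_subtractf[symmetric] algebra_simps scaleR_diff_left)
  qed
  thus ?thesis using nsq_sum[of "\<lambda>b. (ev b - l) * (x \<bullet> b)"] by (simp add: power_mult_distrib)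
qed

lemma eigenspace_eq: "eigenspace A \<mu> = span {b\<in>B. ev b = \<mu>}"
proof
  show "eigenspace A \<mu> \<subseteq> span {b\<in>B. ev b = \<mu>}"
  proof
    fix x assume "x \<in> eigenspace A \<mu>"
    hence "A *v x - \<mu> *\<^sub>R x = 0" unfolding eigenspace_def by simp
    hence "(\<Sum>b\<in>B. (ev b - \<mu>)^2 * (x \<bullet> b)^2) = 0" using shift_sq[of x \<mu>] by simp
    hence z: "\<forall>b\<in>B. (ev b - \<mu>)^2 * (x \<bullet> b)^2 = 0"
      using sum_nonneg_eq_0_iff[OF fin, of "\<lambda>b. (ev b - \<mu>)^2 * (x \<bullet> b)^2"] by simp
    have z': "\<forall>b\<in>B. ev b \<noteq> \<mu> \<longrightarrow> (x \<bullet> b) *\<^sub>R b = 0"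
    proof (intro ballI impI)
      fix b assume "b \<in> B" "ev b \<noteq> \<mu>"
      hence "(ev b - \<mu>)^2 \<noteq> 0" by simp
      moreover have "(ev b - \<mu>)^2 * (x \<bullet> b)^2 = 0" using z \<open>b \<in> B\<close> by blast
      ultimately have "(x \<bullet> b)^2 = 0" by simp
      thus "(x \<bullet> b) *\<^sub>R b = 0" by simp
    qed
    have "x = (\<Sum>b\<in>B. (x \<bullet> b) *\<^sub>R b)" using expand by simp
    also have "\<dots> = (\<Sum>b\<in>{b\<in>B. ev b = \<mu>}. (x \<bullet> b) *\<^sub>R b)"
      by (rule sum.mono_neutral_right) (use fin z' in auto)
    also have "\<dots> \<in> span {b\<in>B. ev b = \<mu>}"
      by (intro span_sum span_scale span_base) auto
    finally show "x \<in> span {b\<in>B. ev b = \<mu>}" .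
  qed
  have "subspace (eigenspace A \<mu>)" unfolding eigenspace_def subspace_def
    by (simp add: matrix_vector_right_distrib matrix_vector_mult_scaleR scaleR_add_right)
  moreover have "{b\<in>B. ev b = \<mu>} \<subseteq> eigenspace A \<mu>" unfolding eigenspace_def
    using eig_ev by auto
  ultimately show "span {b\<in>B. ev b = \<mu>} \<subseteq> eigenspace A \<mu>" by (simp add: span_minimal)
qed

lemma indepB: "independent B"
  using orth unit by (intro pairwise_orthogonal_independent) (auto, fastforce)

lemma dim_eig: "dim (eigenspace A \<mu>) = card {b\<in>B. ev b = \<mu>}"
  unfolding eigenspace_eq
  by (metis (no_types, lifting) dim_span dim_eq_card_independent indepB independent_mono mem_Collect_eq subsetI)

lemma eigvals: "{\<mu>. \<exists>v. v \<noteq> 0 \<and> A *v v = \<mu> *\<^sub>R v} = ev ` B"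
proof
  show "{\<mu>. \<exists>v. v \<noteq> 0 \<and> A *v v = \<mu> *\<^sub>R v} \<subseteq> ev ` B"
  proof
    fix \<mu> assume "\<mu> \<in> {\<mu>. \<exists>v. v \<noteq> 0 \<and> A *v v = \<mu> *\<^sub>R v}"
    then obtain v where "v \<noteq> 0" "v \<in> eigenspace A \<mu>" unfolding eigenspace_def by auto
    hence "{b\<in>B. ev b = \<mu>} \<noteq> {}" unfolding eigenspace_eq by (metis span_empty singletonD)
    thus "\<mu> \<in> ev ` B" by auto
  qed
  show "ev ` B \<subseteq> {\<mu>. \<exists>v. v \<noteq> 0 \<and> A *v v = \<mu> *\<^sub>R v}"
  proof
    fix \<mu> assume "\<mu> \<in> ev ` B"
    then obtain b where "b \<in> B" "\<mu> = ev b" by blast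
    moreover have "b \<noteq> 0" using unit[OF \<open>b \<in> B\<close>] by auto
    ultimately show "\<mu> \<in> {\<mu>. \<exists>v. v \<noteq> 0 \<and> A *v v = \<mu> *\<^sub>R v}" using eig_ev by blast
  qed
qed

lemma eig_mset_eq: "eig_mset A = image_mset ev (mset_set B)"
proof (rule multiset_eqI)
  fix x
  have "count (eig_mset A) x = (\<Sum>\<mu>\<in>ev ` B. count (replicate_mset (card {b\<in>B. ev b = \<mu>}) \<mu>) x)"
    unfolding eig_mset_def eigvals dim_eig by (simp add: count_sum)
  also have "\<dots> = (\<Sum>\<mu>\<in>ev ` B. if \<mu> = x then card {b\<in>B. ev b = x} else 0)"
    by (rule sum.cong) auto
  also have "\<dots> = card {b\<in>B. ev b = x}"
    using fin by (auto simp: sum.delta)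
  also have "\<dots> = count (image_mset ev (mset_set B)) x"
    using fin by (simp add: count_image_mset Int_def conj_commute vimage_def)
  finally show "count (eig_mset A) x = count (image_mset ev (mset_set B)) x" .
qed

end

(* ---- Cnt ---- *)


lemma sorted_nth_less:
  fixes xs :: "real list"
  shows "sorted xs \<Longrightarrow> i < length xs \<Longrightarrow> (xs!i < t) = (i < length (filter (\<lambda>x. x < t) xs))"
proof (induction xs arbitrary: i)
  case Nil then show ?case by simp
next
  case (Cons x xs)
  show ?case
  proof (cases "x < t")
    case True
    show ?thesis
    proof (cases i)
      case 0 then show ?thesis using True by simp
    next
      case (Suc i') then show ?thesis using Cons True by auto
    qed
  next
    case False
    have all: "\<forall>y\<in>set (x#xs). \<not> y < t" using Cons.prems(1) False by auto
    hence "filter (\<lambda>x. x < t) (x#xs) = []" by (simp add: filter_empty_conv)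
    moreover have "\<not> (x#xs)!i < t" using all Cons.prems(2) nth_mem by blast
    ultimately show ?thesis by simp
  qed
qed

context eigb begin

definition N where "N t = card {b\<in>B. ev b < t}"

lemma size_filter: "size (filter_mset P (eig_mset A)) = card {b\<in>B. P (ev b)}"
proof -
  have "filter_mset P (eig_mset A) = image_mset ev (mset_set {b\<in>B. P (ev b)})"
    unfolding eig_mset_eq using fin
    by (simp add: filter_mset_image_mset filter_mset_mset_set)
  thus ?thesis using fin by simp
qed

lemma size_eig: "size (eig_mset A) = CARD('n)"
  unfolding eig_mset_eq using fin cardB by simp

lemma count_eig: "count (eig_mset A) \<mu> = card {b\<in>B. ev b = \<mu>}"
  using size_filter[of "\<lambda>x. x = \<mu>"]
  by (metis (mono_tags) filter_eq_replicate_mset size_replicate_mset)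

lemma lam_less: assumes "1 \<le> j" "j \<le> CARD('n)" shows "(lam A j < t) = (j \<le> N t)"
proof -
  define L where "L = sorted_list_of_multiset (eig_mset A)"
  have s: "sorted L" unfolding L_def by simp
  have lenL: "length L = CARD('n)" unfolding L_def using size_eig
    by (metis mset_sorted_list_of_multiset size_mset)
  have "length (filter (\<lambda>x. x < t) L) = size (filter_mset (\<lambda>x. x < t) (eig_mset A))"
    unfolding L_def by (metis mset_filter mset_sorted_list_of_multiset size_mset)
  also have "\<dots> = N t" unfolding N_def size_filter ..
  finally have fl: "length (filter (\<lambda>x. x < t) L) = N t" .
  have "lam A j = L ! (j-1)" unfolding lam_def L_def ..
  thus ?thesis using sorted_nth_less[OF s, of "j-1" t] fl lenL assms by auto
qed

lemma lam_mem: assumes "1 \<le> j" "j \<le> CARD('n)" shows "lam A j \<in> ev ` B"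
proof -
  define L where "L = sorted_list_of_multiset (eig_mset A)"
  have lenL: "length L = CARD('n)" unfolding L_def using size_eig
    by (metis mset_sorted_list_of_multiset size_mset)
  have "lam A j \<in> set L" unfolding lam_def L_def[symmetric] using lenL assms by simp
  hence "lam A j \<in># eig_mset A" unfolding L_def by simp
  thus ?thesis unfolding eig_mset_eq using fin by auto
qed

lemma span_orth: assumes "T \<subseteq> B" "v \<in> span T" "b \<in> B - T" shows "v \<bullet> b = 0"
proof -
  have "subspace {v. v \<bullet> b = 0}" by (auto simp: subspace_def inner_add_left)
  moreover have "T \<subseteq> {v. v \<bullet> b = 0}" using assms(1,3) borth by auto
  ultimately have "span T \<subseteq> {v. v \<bullet> b = 0}" by (simp add: span_minimal)
  thus ?thesis using assms(2) by auto
qed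

lemma dim_spanT: "T \<subseteq> B \<Longrightarrow> dim (span T) = card T"
  by (metis dim_span dim_eq_card_independent indepB independent_mono)

lemma quad_upper: assumes "v \<in> span {b\<in>B. ev b < t}" "v \<noteq> 0"
  shows "v \<bullet> (A *v v) < t * (v \<bullet> v)"
proof -
  have z: "\<And>b. b \<in> B \<Longrightarrow> \<not> ev b < t \<Longrightarrow> v \<bullet> b = 0"
    using span_orth[of "{b\<in>B. ev b < t}" v] assms(1) by auto
  have "0 < v \<bullet> v" using assms(2) by simp
  hence "0 < (\<Sum>b\<in>B. (v \<bullet> b)^2)" using xx by simp
  then obtain b0 where b0: "b0 \<in> B" "(v \<bullet> b0)^2 \<noteq> 0"
    by (metis (no_types, lifting) sum.neutral less_irrefl)
  have "v \<bullet> (A *v v) = (\<Sum>b\<in>B. ev b * (v \<bullet> b)^2)" by (rule xAx)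
  also have "\<dots> < (\<Sum>b\<in>B. t * (v \<bullet> b)^2)"
  proof (rule sum_strict_mono_ex1[OF fin])
    show "\<forall>b\<in>B. ev b * (v \<bullet> b)^2 \<le> t * (v \<bullet> b)^2"
    proof
      fix b assume "b \<in> B"
      show "ev b * (v \<bullet> b)^2 \<le> t * (v \<bullet> b)^2"
      proof (cases "ev b < t")
        case True then show ?thesis by (simp add: mult_right_mono)
      next
        case False then show ?thesis using z \<open>b \<in> B\<close> by simp
      qed
    qed
    have "ev b0 < t" using z b0 by fastforce
    hence "ev b0 * (v \<bullet> b0)^2 < t * (v \<bullet> b0)^2" using b0(2)
      by (simp add: mult_strict_right_mono)
    thus "\<exists>b\<in>B. ev b * (v \<bullet> b)^2 < t * (v \<bullet> b)^2" using b0 by blast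
  qed
  also have "\<dots> = t * (v \<bullet> v)" by (simp add: xx sum_distrib_left)
  finally show ?thesis .
qed

lemma quad_lower: assumes "v \<in> span {b\<in>B. s \<le> ev b}"
  shows "s * (v \<bullet> v) \<le> v \<bullet> (A *v v)"
proof -
  have z: "\<And>b. b \<in> B \<Longrightarrow> \<not> s \<le> ev b \<Longrightarrow> v \<bullet> b = 0"
    using span_orth[of "{b\<in>B. s \<le> ev b}" v] assms(1) by auto
  have "s * (v \<bullet> v) = (\<Sum>b\<in>B. s * (v \<bullet> b)^2)" by (simp add: xx sum_distrib_left)
  also have "\<dots> \<le> (\<Sum>b\<in>B. ev b * (v \<bullet> b)^2)"
  proof (rule sum_mono)
    fix b assume "b \<in> B"
    show "s * (v \<bullet> b)^2 \<le> ev b * (v \<bullet> b)^2"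
    proof (cases "s \<le> ev b")
      case True then show ?thesis by (simp add: mult_right_mono)
    next
      case False then show ?thesis using z \<open>b \<in> B\<close> by simp
    qed
  qed
  also have "\<dots> = v \<bullet> (A *v v)" by (rule xAx[symmetric])
  finally show ?thesis .
qed

end

lemma count_perturb:
  fixes A C :: "real^'n::finite^'n"
  assumes EA: "eigb A BA" and EC: "eigb C BC"
    and pert: "\<And>v. v \<bullet> (C *v v) \<le> v \<bullet> (A *v v) + \<eta> * (v \<bullet> v)"
  shows "eigb.N A BA t \<le> eigb.N C BC (t + \<eta>)"
proof -
  interpret a: eigb A BA by (rule EA)
  interpret c: eigb C BC by (rule EC)
  define V where "V = span {b\<in>BA. a.ev b < t}"
  define W where "W = span {b\<in>BC. t + \<eta> \<le> c.ev b}"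
  have dV: "dim V = a.N t" unfolding V_def a.N_def by (rule a.dim_spanT) auto
  have dW: "dim W = card {b\<in>BC. t + \<eta> \<le> c.ev b}" unfolding W_def by (rule c.dim_spanT) auto
  have cpart: "card {b\<in>BC. t + \<eta> \<le> c.ev b} + c.N (t + \<eta>) = CARD('n)"
  proof -
    have "{b\<in>BC. t + \<eta> \<le> c.ev b} \<union> {b\<in>BC. c.ev b < t + \<eta>} = BC" by auto
    moreover have "{b\<in>BC. t + \<eta> \<le> c.ev b} \<inter> {b\<in>BC. c.ev b < t + \<eta>} = {}" by auto
    ultimately show ?thesis unfolding c.N_def using c.fin c.cardB
      by (metis (no_types, lifting) card_Un_disjoint finite_Un)
  qed
  have inter: "V \<inter> W = {0}"
  proof (rule ccontr)
    assume "V \<inter> W \<noteq> {0}"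
    moreover have "0 \<in> V \<inter> W" unfolding V_def W_def by (simp add: span_zero)
    ultimately obtain v where v: "v \<in> V" "v \<in> W" "v \<noteq> 0" by blast
    have "v \<bullet> (A *v v) < t * (v \<bullet> v)" using a.quad_upper v unfolding V_def by blast
    moreover have "(t + \<eta>) * (v \<bullet> v) \<le> v \<bullet> (C *v v)" using c.quad_lower v unfolding W_def by blast
    ultimately show False using pert[of v] by (simp add: algebra_simps)
  qed
  have "dim {x + y |x y. x \<in> V \<and> y \<in> W} + dim (V \<inter> W) = dim V + dim W"
    by (rule dim_sums_Int) (auto simp: V_def W_def)
  moreover have "dim (V \<inter> W) = 0" using inter by simp
  moreover have "dim {x + y |x y. x \<in> V \<and> y \<in> W} \<le> CARD('n)" by (rule dim_subset_UNIV_cart)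
  ultimately have "dim V + dim W \<le> CARD('n)" by linarith
  thus ?thesis using dV dW cpart by linarith
qed


(* ---- Ev ---- *)


definition xsel :: "real^'n::finite^'n \<Rightarrow> nat \<Rightarrow> real^'n" where
  "xsel A j = (SOME x. norm x = 1 \<and> A *v x = lam A j *\<^sub>R x)"

lemma eigb_exists: fixes A :: "real^'n::finite^'n" assumes "transpose A = A"
  obtains B where "eigb A B"
proof (rule spectral[OF assms])
  fix B assume "pairwise orthogonal B" "\<And>b. b\<in>B \<Longrightarrow> norm b = 1"
    "\<And>b. b\<in>B \<Longrightarrow> A *v b = (b \<bullet> (A *v b)) *\<^sub>R b" "span B = UNIV"
    "finite B" "card B = CARD('n)"
  hence "eigb A B" by (intro eigb.intro assms)
  thus thesis by (rule that)
qed

lemma xsel_prop: fixes A :: "real^'n::finite^'n"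
  assumes "eigb A B" "1 \<le> j" "j \<le> CARD('n)"
  shows "norm (xsel A j) = 1 \<and> A *v xsel A j = lam A j *\<^sub>R xsel A j"
proof -
  interpret eigb A B by fact
  obtain b where "b \<in> B" "lam A j = ev b" using lam_mem[OF assms(2,3)] by blast
  hence "norm b = 1 \<and> A *v b = lam A j *\<^sub>R b" using unit eig_ev by simp
  thus ?thesis unfolding xsel_def by (rule someI)
qed

lemma pert_quad: fixes A C :: "real^'n::finite^'n"
  assumes "\<And>v. norm ((C - A) *v v) \<le> \<eta> * norm v"
  shows "v \<bullet> (C *v v) \<le> v \<bullet> (A *v v) + \<eta> * (v \<bullet> v)"
proof -
  have "v \<bullet> ((C - A) *v v) \<le> norm v * norm ((C - A) *v v)" by (rule norm_cauchy_schwarz)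
  also have "\<dots> \<le> norm v * (\<eta> * norm v)" by (simp add: assms mult_left_mono)
  also have "\<dots> = \<eta> * (v \<bullet> v)" by (simp add: power2_norm_eq_inner[symmetric] power2_eq_square)
  finally show ?thesis by (simp add: matrix_vector_mult_diff_rdistrib inner_diff_right)
qed

lemma ev_perturb:
  fixes A :: "real^'n::finite^'n"
  assumes symA: "transpose A = A" and j: "1 \<le> j" "j \<le> CARD('n)"
    and simple: "count (eig_mset A) (lam A j) = 1"
  shows "\<exists>g>0. \<forall>C \<eta>. transpose C = C \<longrightarrow> (\<forall>v. norm ((C - A) *v v) \<le> \<eta> * norm v) \<longrightarrow>
     0 \<le> \<eta> \<longrightarrow> \<eta> \<le> g/4 \<longrightarrow> norm (xsel C j) = 1 \<and>
     (\<exists>s::real. (s = 1 \<or> s = -1) \<and> norm (xsel C j - s *\<^sub>R xsel A j) \<le> (8/g) * \<eta>)"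
proof -
  obtain BA where EA: "eigb A BA" using eigb_exists[OF symA] by blast
  interpret a: eigb A BA by (rule EA)
  define \<nu> where "\<nu> = lam A j"
  have c1: "card {b\<in>BA. a.ev b = \<nu>} = 1" using simple a.count_eig unfolding \<nu>_def by simp
  then obtain b0 where b0set: "{b\<in>BA. a.ev b = \<nu>} = {b0}" by (meson card_1_singletonE)
  hence b0: "b0 \<in> BA" "a.ev b0 = \<nu>" and b0u: "\<And>b. b \<in> BA \<Longrightarrow> a.ev b = \<nu> \<Longrightarrow> b = b0" by auto
  define g where "g = Min (insert 1 ((\<lambda>b. \<bar>a.ev b - \<nu>\<bar>) ` (BA - {b0})))"
  have gfin: "finite (insert 1 ((\<lambda>b. \<bar>a.ev b - \<nu>\<bar>) ` (BA - {b0})))" using a.fin by simp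
  have gpos: "g > 0" unfolding g_def
  proof (subst Min_gr_iff[OF gfin], simp, intro ballI)
    fix x assume "x \<in> insert 1 ((\<lambda>b. \<bar>a.ev b - \<nu>\<bar>) ` (BA - {b0}))"
    then show "0 < x" using b0u by fastforce
  qed
  have gle: "g \<le> \<bar>a.ev b - \<nu>\<bar>" if "b \<in> BA" "b \<noteq> b0" for b
    unfolding g_def using gfin that by (intro Min_le) auto
  have Nup: "j \<le> a.N (\<nu> + g/2)" using a.lam_less[OF j, of "\<nu> + g/2"] gpos unfolding \<nu>_def by simp
  have Nnu: "\<not> j \<le> a.N \<nu>" using a.lam_less[OF j, of \<nu>] unfolding \<nu>_def by simp
  have Ndown: "a.N (\<nu> - g/2) \<le> a.N \<nu>" unfolding a.N_def using a.fin gpos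
    by (intro card_mono) auto
  have xs: "norm (xsel A j) = 1" "A *v xsel A j = \<nu> *\<^sub>R xsel A j"
    using xsel_prop[OF EA j] unfolding \<nu>_def by auto
  \<comment> \<open>x* = s0 b0\<close>
  obtain s0 :: real where s0: "s0 = 1 \<or> s0 = -1" "xsel A j = s0 *\<^sub>R b0"
  proof -
    define x where "x = xsel A j"
    have "(\<Sum>b\<in>BA. (a.ev b - \<nu>)^2 * (x \<bullet> b)^2) = 0"
      using a.shift_sq[of x \<nu>] xs unfolding x_def by simp
    hence z: "\<forall>b\<in>BA. (a.ev b - \<nu>)^2 * (x \<bullet> b)^2 = 0"
      using sum_nonneg_eq_0_iff[OF a.fin, of "\<lambda>b. (a.ev b - \<nu>)^2 * (x \<bullet> b)^2"] by simp
    have z': "\<forall>b\<in>BA - {b0}. (x \<bullet> b) *\<^sub>R b = 0"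
    proof
      fix b assume b: "b \<in> BA - {b0}"
      hence "(a.ev b - \<nu>)^2 \<noteq> 0" using b0u by auto
      moreover have "(a.ev b - \<nu>)^2 * (x \<bullet> b)^2 = 0" using z b by blast
      ultimately show "(x \<bullet> b) *\<^sub>R b = 0" by simp
    qed
    have "x = (\<Sum>b\<in>BA. (x \<bullet> b) *\<^sub>R b)" using a.expand by simp
    also have "\<dots> = (\<Sum>b\<in>{b0}. (x \<bullet> b) *\<^sub>R b)"
      by (rule sum.mono_neutral_right) (use a.fin z' b0 in auto)
    finally have xe: "x = (x \<bullet> b0) *\<^sub>R b0" by simp
    have "1 = x \<bullet> x" using xs unfolding x_def by (simp add: norm_eq_1)
    also have "\<dots> = (x \<bullet> b0)^2 * (b0 \<bullet> b0)" by (subst xe, subst (2) xe) (simp add: power2_eq_square)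
    finally have "(x \<bullet> b0)^2 = 1" using a.bb[OF b0(1)] by simp
    hence "x \<bullet> b0 = 1 \<or> x \<bullet> b0 = -1" by (simp add: power2_eq_1_iff)
    thus ?thesis using that xe unfolding x_def by blast
  qed
  show ?thesis
  proof (rule exI[of _ g], intro conjI gpos allI impI)
    fix C :: "real^'n^'n" and \<eta> :: real
    assume symC: "transpose C = C" and pert: "\<forall>v. norm ((C - A) *v v) \<le> \<eta> * norm v"
      and eta0: "0 \<le> \<eta>" and etag: "\<eta> \<le> g/4"
    obtain BC where EC: "eigb C BC" using eigb_exists[OF symC] by blast
    interpret c: eigb C BC by (rule EC)
    have pert': "\<forall>v. norm ((A - C) *v v) \<le> \<eta> * norm v"
    proof
      fix v
      have "(A - C) *v v = - ((C - A) *v v)" by (simp add: matrix_vector_mult_diff_rdistrib)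
      thus "norm ((A - C) *v v) \<le> \<eta> * norm v" using pert by simp
    qed
    have p1: "a.N (\<nu> + g/2) \<le> c.N (\<nu> + g/2 + \<eta>)"
      by (rule count_perturb[OF EA EC]) (rule pert_quad, use pert in blast)
    have p2: "c.N (\<nu> - g/2 - \<eta>) \<le> a.N (\<nu> - g/2 - \<eta> + \<eta>)"
      by (rule count_perturb[OF EC EA]) (rule pert_quad, use pert' in blast)
    define l where "l = lam C j"
    have lup: "l < \<nu> + g/2 + \<eta>" using c.lam_less[OF j] p1 Nup unfolding l_def by simp
    have ldown: "\<not> l < \<nu> - g/2 - \<eta>" using c.lam_less[OF j, of "\<nu> - g/2 - \<eta>"] p2 Ndown Nnu
      unfolding l_def by simp
    have xh: "norm (xsel C j) = 1" "C *v xsel C j = l *\<^sub>R xsel C j"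
      using xsel_prop[OF EC j] unfolding l_def by auto
    define x where "x = xsel C j"
    define c where "c = x \<bullet> b0"
    have "A *v x - l *\<^sub>R x = (A - C) *v x" using xh unfolding x_def
      by (simp add: matrix_vector_mult_diff_rdistrib)
    hence "norm (A *v x - l *\<^sub>R x) \<le> \<eta>" using pert' xh unfolding x_def by (metis mult.right_neutral)
    hence "(A *v x - l *\<^sub>R x) \<bullet> (A *v x - l *\<^sub>R x) \<le> \<eta>^2"
      by (metis norm_ge_zero power2_norm_eq_inner power_mono)
    hence S1: "(\<Sum>b\<in>BA. (a.ev b - l)^2 * (x \<bullet> b)^2) \<le> \<eta>^2" using a.shift_sq by simp
    have "(\<Sum>b\<in>BA - {b0}. (g/4)^2 * (x \<bullet> b)^2) \<le> (\<Sum>b\<in>BA - {b0}. (a.ev b - l)^2 * (x \<bullet> b)^2)"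
    proof (rule sum_mono)
      fix b assume b: "b \<in> BA - {b0}"
      have "g \<le> \<bar>a.ev b - \<nu>\<bar>" using gle b by auto
      hence "g/4 \<le> \<bar>a.ev b - l\<bar>" using lup ldown etag by linarith
      hence "(g/4)^2 \<le> (a.ev b - l)^2" using gpos
        by (metis abs_le_square_iff abs_of_pos zero_less_divide_iff zero_less_numeral power2_abs)
      thus "(g/4)^2 * (x \<bullet> b)^2 \<le> (a.ev b - l)^2 * (x \<bullet> b)^2" by (simp add: mult_right_mono)
    qed
    also have "\<dots> \<le> (\<Sum>b\<in>BA. (a.ev b - l)^2 * (x \<bullet> b)^2)"
      by (rule sum_mono2) (use a.fin in auto)
    finally have S2: "(g/4)^2 * (\<Sum>b\<in>BA - {b0}. (x \<bullet> b)^2) \<le> \<eta>^2" using S1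
      by (simp add: sum_distrib_left)
    have "1 = x \<bullet> x" using xh unfolding x_def by (simp add: norm_eq_1)
    also have "\<dots> = (\<Sum>b\<in>BA. (x \<bullet> b)^2)" by (rule a.xx)
    also have "\<dots> = c^2 + (\<Sum>b\<in>BA - {b0}. (x \<bullet> b)^2)" unfolding c_def
      using a.fin b0 by (simp add: sum.remove)
    finally have S3: "(\<Sum>b\<in>BA - {b0}. (x \<bullet> b)^2) = 1 - c^2" by simp
    have rest0: "0 \<le> 1 - c^2" using S3[symmetric] by (simp add: sum_nonneg)
    have S4: "(g/4)^2 * (1 - c^2) \<le> \<eta>^2" using S2 S3 by simp
    define \<sigma> :: real where "\<sigma> = (if c \<ge> 0 then 1 else -1)"
    have sc: "\<sigma> * c = \<bar>c\<bar>" unfolding \<sigma>_def by auto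
    have cle1: "\<bar>c\<bar> \<le> 1" using rest0 by (simp add: abs_square_le_1)
    have c2: "c^2 \<le> \<bar>c\<bar>"
    proof -
      have "c^2 = \<bar>c\<bar> * \<bar>c\<bar>" by (simp add: power2_eq_square)
      also have "\<dots> \<le> 1 * \<bar>c\<bar>" using cle1 by (rule mult_right_mono) auto
      finally show ?thesis by simp
    qed
    have "(x - \<sigma> *\<^sub>R b0) \<bullet> (x - \<sigma> *\<^sub>R b0) = x \<bullet> x - 2 * (\<sigma> * c) + (\<sigma> * \<sigma>) * (b0 \<bullet> b0)"
      unfolding c_def by (simp add: inner_diff_left inner_diff_right inner_commute[of b0 x] right_diff_distrib)
    also have "\<dots> = 2 - 2 * \<bar>c\<bar>"
    proof -
      have "x \<bullet> x = 1" using xh unfolding x_def by (simp add: norm_eq_1)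
      moreover have "\<sigma> * \<sigma> = 1" unfolding \<sigma>_def by simp
      ultimately show ?thesis using a.bb[OF b0(1)] sc by simp
    qed
    also have "\<dots> \<le> 2 * (1 - c^2)" using c2 by simp
    finally have n2: "(norm (x - \<sigma> *\<^sub>R b0))^2 \<le> 2 * (1 - c^2)" by (simp add: power2_norm_eq_inner)
    define nn where "nn = norm (x - \<sigma> *\<^sub>R b0)"
    have "(g/4)^2 * nn^2 \<le> (g/4)^2 * (2 * (1 - c^2))" using n2 unfolding nn_def by (rule mult_left_mono) auto
    also have "\<dots> = 2 * ((g/4)^2 * (1 - c^2))" by (simp only: mult.left_commute)
    also have "\<dots> \<le> 2 * \<eta>^2" using S4 by linarith
    finally have n4: "(g/4)^2 * nn^2 \<le> 2 * \<eta>^2" .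
    have "(g * nn)^2 = 16 * ((g/4)^2 * nn^2)" by (simp add: power2_eq_square)
    also have "\<dots> \<le> 16 * (2 * \<eta>^2)" using n4 by linarith
    also have "\<dots> \<le> (8 * \<eta>)^2" by (simp add: power2_eq_square)
    finally have "(g * nn)^2 \<le> (8 * \<eta>)^2" .
    moreover have "0 \<le> 8 * \<eta>" using eta0 by simp
    ultimately have "g * nn \<le> 8 * \<eta>" by (rule power2_le_imp_le)
    hence n3: "nn \<le> (8/g) * \<eta>" using gpos by (simp add: field_simps)
    have "(\<sigma> * s0) *\<^sub>R xsel A j = \<sigma> *\<^sub>R b0" using s0 by auto
    moreover have "\<sigma> * s0 = 1 \<or> \<sigma> * s0 = -1" using s0 unfolding \<sigma>_def by auto
    ultimately show "\<exists>s::real. (s = 1 \<or> s = -1) \<and> norm (xsel C j - s *\<^sub>R xsel A j) \<le> (8/g) * \<eta>"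
      using n3 unfolding x_def nn_def by (metis (no_types, lifting))
    show "norm (xsel C j) = 1" by (rule xh(1))
  qed
qed


(* ---- Mx ---- *)


definition outer :: "real^'n::finite \<Rightarrow> real^'n \<Rightarrow> real^'n^'n" where
  "outer a b = (\<chi> i j. a$i * b$j)"

lemma outer_mv: "outer a b *v v = (b \<bullet> v) *\<^sub>R a"
  by (simp add: vec_eq_iff outer_def matrix_vector_mult_def inner_vec_def sum_distrib_left
      sum_distrib_right ac_simps)

lemma mv_assoc: "(A ** B) *v v = A *v (B *v v)" by (simp add: matrix_vector_mul_assoc)

lemma norm_sq_vec: fixes x :: "real^'n::finite" shows "(norm x)^2 = (\<Sum>i\<in>UNIV. (x$i)^2)"
proof -
  have "(norm x)^2 = x \<bullet> x" by (rule power2_norm_eq_inner)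
  also have "\<dots> = (\<Sum>i\<in>UNIV. (x$i)^2)" by (simp add: inner_vec_def power2_eq_square)
  finally show ?thesis .
qed

lemma norm_sq_mat: fixes X :: "real^'n::finite^'m::finite"
  shows "(norm X)^2 = (\<Sum>i\<in>UNIV. (norm (X$i))^2)"
proof -
  have "(norm X)^2 = X \<bullet> X" by (rule power2_norm_eq_inner)
  also have "\<dots> = (\<Sum>i\<in>UNIV. (norm (X$i))^2)" by (simp add: inner_vec_def power2_norm_eq_inner)
  finally show ?thesis .
qed

lemma frob_inner_eq: fixes X Y :: "real^'n::finite^'n" shows "frob_inner X Y = X \<bullet> Y"
proof -
  have "frob_inner X Y = (\<Sum>i\<in>UNIV. \<Sum>k\<in>UNIV. X$k$i * Y$k$i)"
    unfolding frob_inner_def trace_def matrix_matrix_mult_def transpose_def by simp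
  also have "\<dots> = (\<Sum>k\<in>UNIV. \<Sum>i\<in>UNIV. X$k$i * Y$k$i)" by (rule sum.swap)
  also have "\<dots> = X \<bullet> Y" by (simp add: inner_vec_def)
  finally show ?thesis .
qed

lemma frob_eq: "frob_norm X = norm X"
  unfolding frob_norm_def frob_inner_eq by (simp add: norm_eq_sqrt_inner)

lemma norm_mv: fixes M :: "real^'n::finite^'m::finite" shows "norm (M *v v) \<le> norm M * norm v"
proof -
  have "(norm (M *v v))^2 = (\<Sum>i\<in>UNIV. (M$i \<bullet> v)^2)"
    by (simp add: norm_sq_vec matrix_vector_mul_component)
  also have "\<dots> \<le> (\<Sum>i\<in>UNIV. (norm (M$i))^2 * (norm v)^2)"
  proof (rule sum_mono)
    fix i
    have "\<bar>M$i \<bullet> v\<bar> \<le> norm (M$i) * norm v" by (rule Cauchy_Schwarz_ineq2)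
    hence "\<bar>M$i \<bullet> v\<bar>^2 \<le> (norm (M$i) * norm v)^2" by (rule power_mono) simp
    thus "(M$i \<bullet> v)^2 \<le> (norm (M$i))^2 * (norm v)^2" by (simp add: power_mult_distrib)
  qed
  also have "\<dots> = (norm M * norm v)^2"
    by (simp add: norm_sq_mat power_mult_distrib sum_distrib_right)
  finally show ?thesis by (rule power2_le_imp_le) simp
qed

lemma norm_outer: "norm (outer a b) \<le> norm a * norm b"
proof -
  have "(norm (outer a b))^2 = (\<Sum>i\<in>UNIV. (norm (a$i *\<^sub>R b))^2)"
  proof -
    have "\<And>i. outer a b $ i = a$i *\<^sub>R b" by (simp add: outer_def vec_eq_iff)
    thus ?thesis unfolding norm_sq_mat by simp
  qed
  also have "\<dots> = (\<Sum>i\<in>UNIV. (a$i)^2) * (norm b)^2"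
    by (simp add: power_mult_distrib sum_distrib_right)
  also have "\<dots> = (norm a * norm b)^2" by (simp add: norm_sq_vec power_mult_distrib)
  finally show ?thesis by simp
qed

lemma norm_hadamard: fixes u v :: "real^'n::finite"
  shows "norm (\<chi> i. u$i * v$i) \<le> norm u * norm v"
proof -
  have "(norm (\<chi> i. u$i * v$i))^2 = (\<Sum>i\<in>UNIV. (u$i)^2 * (v$i)^2)"
    by (simp add: norm_sq_vec power_mult_distrib)
  also have "\<dots> \<le> (\<Sum>i\<in>UNIV. (u$i)^2 * (norm v)^2)"
  proof (rule sum_mono)
    fix i
    have "\<bar>v$i\<bar> \<le> norm v" by (rule component_le_norm_cart)
    hence "\<bar>v$i\<bar>^2 \<le> (norm v)^2" by (rule power_mono) simp
    thus "(u$i)^2 * (v$i)^2 \<le> (u$i)^2 * (norm v)^2" by (simp add: mult_left_mono)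
  qed
  also have "\<dots> = (norm u * norm v)^2" by (simp add: norm_sq_vec power_mult_distrib sum_distrib_right)
  finally show ?thesis by (rule power2_le_imp_le) simp
qed

lemma sandwich_outer: fixes Q :: "real^'n::finite^'n" assumes "transpose Q = Q"
  shows "Q ** outer a b ** Q = outer (Q *v a) (Q *v b)"
  unfolding matrix_eq
proof
  fix v
  have "(Q ** outer a b ** Q) *v v = (b \<bullet> (Q *v v)) *\<^sub>R (Q *v a)"
    by (simp add: mv_assoc outer_mv matrix_vector_mult_scaleR)
  also have "\<dots> = ((Q *v b) \<bullet> v) *\<^sub>R (Q *v a)" using sym_dot[OF assms] by simp
  finally show "(Q ** outer a b ** Q) *v v = outer (Q *v a) (Q *v b) *v v" by (simp add: outer_mv)
qed

lemma sandwich_add: fixes Q X Y :: "real^'n::finite^'n" shows "Q ** (X + Y) ** Q = Q ** X ** Q + Q ** Y ** Q"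
  unfolding matrix_eq
proof
  fix v
  have "(Q ** (X + Y) ** Q) *v v = Q *v (X *v (Q *v v)) + Q *v (Y *v (Q *v v))"
    by (simp add: mv_assoc matrix_vector_mult_add_rdistrib matrix_vector_right_distrib)
  also have "\<dots> = (Q ** X ** Q + Q ** Y ** Q) *v v" by (simp add: mv_assoc matrix_vector_mult_add_rdistrib)
  finally show "(Q ** (X + Y) ** Q) *v v = (Q ** X ** Q + Q ** Y ** Q) *v v" .
qed

lemma sandwich_diff: fixes Q X Y :: "real^'n::finite^'n" shows "Q ** (X - Y) ** Q = Q ** X ** Q - Q ** Y ** Q"
  unfolding matrix_eq
proof
  fix v
  have "(Q ** (X - Y) ** Q) *v v = Q *v (X *v (Q *v v)) - Q *v (Y *v (Q *v v))"
    by (simp add: mv_assoc matrix_vector_mult_diff_rdistrib matrix_vector_mult_diff_distrib)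
  also have "\<dots> = (Q ** X ** Q - Q ** Y ** Q) *v v" by (simp add: mv_assoc matrix_vector_mult_diff_rdistrib)
  finally show "(Q ** (X - Y) ** Q) *v v = (Q ** X ** Q - Q ** Y ** Q) *v v" .
qed

lemma sandwich_scale: fixes Q X Y :: "real^'n::finite^'n" shows "Q ** (c *\<^sub>R X) ** Q = c *\<^sub>R (Q ** X ** Q)"
  unfolding matrix_eq
proof
  fix v
  have "(Q ** (c *\<^sub>R X) ** Q) *v v = c *\<^sub>R (Q *v (X *v (Q *v v)))"
    by (simp add: mv_assoc scaleR_matrix_vector_assoc[symmetric] matrix_vector_mult_scaleR)
  also have "\<dots> = (c *\<^sub>R (Q ** X ** Q)) *v v" by (simp add: mv_assoc scaleR_matrix_vector_assoc[symmetric])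
  finally show "(Q ** (c *\<^sub>R X) ** Q) *v v = (c *\<^sub>R (Q ** X ** Q)) *v v" .
qed


(* ---- Ux ---- *)


lemma dot_U: fixes U :: "real^'m::finite^'n::finite"
  shows "(U *v a) \<bullet> b = a \<bullet> (transpose U *v b)"
  by (metis dot_lmul_matrix inner_commute transpose_matrix_vector)

lemma UtU: fixes U :: "real^'m::finite^'n::finite"
  assumes "transpose U ** U = mat 1" shows "transpose U *v (U *v w) = w"
  by (simp add: mv_assoc[symmetric] assms)

definition Qm :: "real^4^'n::finite \<Rightarrow> real^'n^'n" where
  "Qm U = mat 1 - U ** transpose U"

lemma Qm_mv: "Qm U *v v = v - U *v (transpose U *v v)"
  unfolding Qm_def by (simp add: matrix_vector_mult_diff_rdistrib mv_assoc)

lemma Qm_sym: "transpose (Qm U) = Qm U"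
  unfolding Qm_def by (simp add: transpose_def matrix_matrix_mult_def vec_eq_iff mat_def mult.commute)

lemma Qm_U: assumes "transpose U ** U = mat 1" shows "transpose U *v (Qm U *v v) = 0"
  unfolding Qm_mv using UtU[OF assms] by (simp add: matrix_vector_mult_diff_distrib)

lemma Qm_Y: assumes "transpose U ** U = mat 1" "Y = U ** S ** transpose U"
  shows "Qm U *v (Y *v v) = 0" "Y *v (Qm U *v v) = 0"
proof -
  show "Y *v (Qm U *v v) = 0" unfolding assms(2) mv_assoc using Qm_U[OF assms(1)] by simp
  have "Y *v v = U *v (S *v (transpose U *v v))" unfolding assms(2) mv_assoc ..
  thus "Qm U *v (Y *v v) = 0" unfolding Qm_mv using UtU[OF assms(1)] by simp
qed

lemma Qm_norm: assumes "transpose U ** U = mat 1" shows "norm (Qm U *v v) \<le> norm v"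
proof -
  define p where "p = U *v (transpose U *v v)"
  have "p \<bullet> (v - p) = 0" unfolding p_def dot_U
    using UtU[OF assms] by (simp add: matrix_vector_mult_diff_distrib)
  hence "v \<bullet> v = (v - p) \<bullet> (v - p) + p \<bullet> p"
    by (simp add: inner_diff_left inner_diff_right inner_commute)
  hence "(norm (v - p))^2 \<le> (norm v)^2" by (simp add: power2_norm_eq_inner)
  hence "norm (v - p) \<le> norm v" by (rule power2_le_imp_le) simp
  thus ?thesis unfolding Qm_mv p_def .
qed

definition Usel :: "real^'n::finite^'n \<Rightarrow> real^4^'n" where
  "Usel Y = (SOME U::real^4^'n. transpose U ** U = mat 1 \<and>
     (\<exists>S::real^4^4. transpose S = S \<and> invertible S \<and> Y = U ** S ** transpose U))"

lemma PY_eq: "PY Y A = A - Qm (Usel Y) ** A ** Qm (Usel Y)"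
  unfolding PY_def Let_def Usel_def Qm_def ..

lemma U_exists:
  fixes Y :: "real^'n::finite^'n"
  assumes symY: "transpose Y = Y" and rk: "rank Y = 4"
  shows "\<exists>U::real^4^'n. transpose U ** U = mat 1 \<and>
     (\<exists>S::real^4^4. transpose S = S \<and> invertible S \<and> Y = U ** S ** transpose U)"
proof -
  define V where "V = range ((*v) Y)"
  have subV: "subspace V" unfolding V_def
    by (rule linear_subspace_image) (auto simp: subspace_UNIV)
  have dimV: "dim V = 4" using rk unfolding V_def rank_dim_range by simp
  obtain Bv where Bv: "Bv \<subseteq> V" "pairwise orthogonal Bv" "\<And>x. x \<in> Bv \<Longrightarrow> norm x = 1"
    "independent Bv" "card Bv = dim V" "span Bv = V"
    by (rule orthonormal_basis_subspace[OF subV]) blast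
  have finBv: "finite Bv" using Bv(4) independent_imp_finite by blast
  have "card (UNIV :: 4 set) = card Bv" using Bv(5) dimV by simp
  then obtain f where bf: "bij_betw f (UNIV :: 4 set) Bv"
    using finite_same_card_bij[of "UNIV :: 4 set" Bv] finBv by auto
  have fB: "f i \<in> Bv" for i using bf by (auto simp: bij_betw_def)
  have finj: "f i = f j \<Longrightarrow> i = j" for i j using bf by (auto simp: bij_betw_def inj_on_def)
  have fdot: "f i \<bullet> f j = (if i = j then 1 else 0)" for i j
  proof (cases "i = j")
    case True then show ?thesis using Bv(3)[OF fB[of i]] by (simp add: norm_eq_1)
  next
    case False then show ?thesis using Bv(2) fB finj unfolding pairwise_def orthogonal_def by metis
  qed
  define U :: "real^4^'n" where "U = (\<chi> r i. f i $ r)"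
  have Uw: "U *v w = (\<Sum>i\<in>UNIV. w$i *\<^sub>R f i)" for w
    by (simp add: U_def vec_eq_iff matrix_vector_mult_def sum_component mult.commute)
  have Utv: "transpose U *v v = (\<chi> i. f i \<bullet> v)" for v
    by (simp add: U_def vec_eq_iff matrix_vector_mult_def transpose_def inner_vec_def)
  have UU: "transpose U ** U = mat 1"
    by (simp add: U_def vec_eq_iff matrix_matrix_mult_def transpose_def mat_def fdot[symmetric] inner_vec_def)
  have Pv: "U *v (transpose U *v v) = v" if "v \<in> V" for v
  proof -
    have "U *v (transpose U *v v) = (\<Sum>i\<in>UNIV. (v \<bullet> f i) *\<^sub>R f i)"
      unfolding Uw Utv by (simp add: inner_commute)
    also have "\<dots> = (\<Sum>b\<in>Bv. (v \<bullet> b) *\<^sub>R b)"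
      by (rule sum.reindex_bij_betw[OF bf])
    also have "\<dots> = v" by (rule orthonormal_basis_expand) (use Bv finBv that in auto)
    finally show ?thesis .
  qed
  have PY1: "U *v (transpose U *v (Y *v v)) = Y *v v" for v
    by (rule Pv) (auto simp: V_def)
  have Psym: "(U *v (transpose U *v a)) \<bullet> b = a \<bullet> (U *v (transpose U *v b))" for a b
  proof -
    have 1: "(U *v (transpose U *v a)) \<bullet> b = (transpose U *v a) \<bullet> (transpose U *v b)" by (rule dot_U)
    have 2: "(U *v (transpose U *v b)) \<bullet> a = (transpose U *v b) \<bullet> (transpose U *v a)" by (rule dot_U)
    show ?thesis using 1 2 by (metis inner_commute)
  qed
  have PY2: "Y *v (U *v (transpose U *v v)) = Y *v v" for v
  proof -
    define d where "d = Y *v (U *v (transpose U *v v)) - Y *v v"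
    have "d \<bullet> d = (Y *v d) \<bullet> (U *v (transpose U *v v)) - (Y *v d) \<bullet> v"
      unfolding d_def by (simp add: inner_diff_left sym_dot[OF symY] inner_commute)
    also have "\<dots> = 0" using Psym[of "Y *v d" v] PY1[of d] by simp
    finally show ?thesis unfolding d_def by simp
  qed
  define S :: "real^4^4" where "S = transpose U ** Y ** U"
  have Yeq: "Y = U ** S ** transpose U"
    unfolding matrix_eq S_def by (simp add: mv_assoc PY1 PY2 del: transpose_matrix_vector)
  have Ssym: "transpose S = S" unfolding S_def by (simp add: matrix_transpose_mul symY matrix_mul_assoc)
  have Sinv: "invertible S"
    unfolding invertible_left_inverse matrix_left_invertible_ker
  proof (intro allI impI)
    fix w assume Sw: "S *v w = 0"
    have YUw: "Y *v (U *v w) = 0"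
    proof -
      have "Y *v (U *v w) = U *v (S *v (transpose U *v (U *v w)))" by (subst Yeq) (simp add: mv_assoc)
      thus ?thesis using UtU[OF UU] Sw by simp
    qed
    have "U *v w \<in> span Bv" unfolding Uw using fB by (intro span_sum span_scale span_base) auto
    then obtain z where z: "U *v w = Y *v z" using Bv(6) unfolding V_def by auto
    have "(Y *v z) \<bullet> (Y *v z) = z \<bullet> (Y *v (Y *v z))" by (rule sym_dot[OF symY])
    also have "\<dots> = 0" using YUw z by simp
    finally have "U *v w = 0" using z by simp
    hence "transpose U *v (U *v w) = 0" by simp
    thus "w = 0" using UtU[OF UU] by simp
  qed
  show ?thesis using UU Ssym Sinv Yeq by blast
qed

lemma Usel_props:
  fixes Y :: "real^'n::finite^'n"
  assumes "transpose Y = Y" "rank Y = 4"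
  shows "transpose (Usel Y) ** Usel Y = mat 1"
    "\<exists>S::real^4^4. Y = Usel Y ** S ** transpose (Usel Y)"
proof -
  have "transpose (Usel Y) ** Usel Y = mat 1 \<and>
     (\<exists>S::real^4^4. transpose S = S \<and> invertible S \<and> Y = Usel Y ** S ** transpose (Usel Y))"
    unfolding Usel_def by (rule someI_ex) (rule U_exists[OF assms])
  thus "transpose (Usel Y) ** Usel Y = mat 1" "\<exists>S::real^4^4. Y = Usel Y ** S ** transpose (Usel Y)"
    by auto
qed


(* ---- St ---- *)


definition one_vec :: "real^'n::finite" where "one_vec = (\<chi> i. 1)"
definition zvec :: "real^'n::finite \<Rightarrow> real^'n \<Rightarrow> real^'n" where
  "zvec x y = (\<chi> i. x$i * x$i - y$i * y$i)"
definition Rform :: "real^'n::finite \<Rightarrow> real^'n \<Rightarrow> real^'n^'n" where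
  "Rform x y = (1/2) *\<^sub>R (outer (zvec x y) one_vec + outer one_vec (zvec x y)) - outer x x + outer y y"

lemma Rmat_eq: "Rmat k W \<epsilon> E = Rform (xsel (laplacian (W + \<epsilon> *\<^sub>R E)) (k+1)) (xsel (laplacian (W + \<epsilon> *\<^sub>R E)) k)"
  unfolding Rmat_def Let_def Rform_def xsel_def
  by (simp add: vec_eq_iff outer_def zvec_def one_vec_def field_simps)

lemma Rform_mv: "Rform x y *v v = (1/2) *\<^sub>R ((one_vec \<bullet> v) *\<^sub>R zvec x y + (zvec x y \<bullet> v) *\<^sub>R one_vec)
   - (x \<bullet> v) *\<^sub>R x + (y \<bullet> v) *\<^sub>R y"
  unfolding Rform_def
  by (simp add: matrix_vector_mult_add_rdistrib matrix_vector_mult_diff_rdistrib outer_mv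
      scaleR_matrix_vector_assoc[symmetric])

lemma Rform_range:
  fixes x y :: "real^'n::finite"
  assumes "rank (Rform x y) = 4"
  shows "{zvec x y, one_vec, x, y} \<subseteq> range ((*v) (Rform x y))"
proof -
  define T where "T = {zvec x y, one_vec, x, y}"
  define V where "V = range ((*v) (Rform x y))"
  have subV: "subspace V" unfolding V_def
    by (rule linear_subspace_image) (auto simp: subspace_UNIV)
  have VT: "V \<subseteq> span T"
  proof
    fix u assume "u \<in> V"
    then obtain v where uv: "u = Rform x y *v v" unfolding V_def by auto
    have "Rform x y *v v \<in> span T" unfolding Rform_mv
      by (intro span_add span_diff span_scale span_base) (auto simp: T_def)
    thus "u \<in> span T" using uv by simp
  qed
  have "dim V = 4" using assms unfolding V_def rank_dim_range by simp
  moreover have "dim (span T) \<le> 4"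
  proof -
    have "dim (span T) = dim T" by (rule dim_span)
    also have "\<dots> \<le> card T" by (rule dim_le_card') (simp add: T_def)
    also have "\<dots> \<le> 4" unfolding T_def by (rule order_trans[OF card_insert_le_m1]) (auto simp: card_insert_le_m1)
    finally show ?thesis .
  qed
  ultimately have "V = span T" using subspace_dim_equal[OF subV subspace_span VT] by simp
  thus ?thesis unfolding T_def V_def by (auto intro: span_base)
qed

lemma star_R:
  fixes R Y :: "real^'n::finite^'n" and U :: "real^4^'n"
  assumes UU: "transpose U ** U = mat 1" and Yeq: "Y = U ** S ** transpose U"
    and rkY: "rank Y = 4" and rkR: "rank R = 4"
    and G: "R - Qm U ** R ** Qm U = \<gamma> *\<^sub>R Y" and g0: "\<gamma> \<noteq> 0"
  shows "R = \<gamma> *\<^sub>R Y"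
proof -
  define Q where "Q = Qm U"
  define M where "M = Q ** R ** Q"
  have RM: "R *v v = \<gamma> *\<^sub>R (Y *v v) + M *v v" for v
  proof -
    have "R = \<gamma> *\<^sub>R Y + M" using G unfolding M_def Q_def by (simp add: algebra_simps)
    thus ?thesis by (simp add: matrix_vector_mult_add_rdistrib scaleR_matrix_vector_assoc[symmetric])
  qed
  have QU: "Q *v (U *v w) = 0" for w unfolding Q_def Qm_mv using UtU[OF UU] by simp
  have QQ: "Q *v (Q *v v) = Q *v v" for v
    unfolding Q_def using Qm_U[OF UU] by (simp add: Qm_mv[of U "Qm U *v v"])
  have YP: "Y *v (U *v (transpose U *v v)) = Y *v v" for v
    unfolding Yeq mv_assoc using UtU[OF UU] by simp
  have r1: "Y *v v \<in> range ((*v) R)" for v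
  proof -
    have "R *v (U *v (transpose U *v v)) = \<gamma> *\<^sub>R (Y *v v)"
      unfolding RM YP by (simp add: M_def mv_assoc QU)
    hence "Y *v v = R *v ((1/\<gamma>) *\<^sub>R (U *v (transpose U *v v)))"
      using g0 by (simp add: matrix_vector_mult_scaleR)
    thus ?thesis by blast
  qed
  have r2: "M *v v \<in> range ((*v) R)" for v
  proof -
    have "Y *v (Q *v v) = 0" unfolding Q_def using Qm_Y[OF UU Yeq] by simp
    hence "R *v (Q *v v) = M *v v" unfolding RM by (simp add: M_def mv_assoc QQ)
    thus ?thesis by (metis rangeI)
  qed
  have orth: "a \<bullet> b = 0" if ha: "a \<in> range ((*v) Y)" and hb: "b \<in> range ((*v) M)" for a b
  proof -
    obtain u where u: "a = Y *v u" using ha by blast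
    obtain w where w: "b = M *v w" using hb by blast
    note uw = u w
    hence "a \<bullet> b = (Q *v (Y *v u)) \<bullet> (R *v (Q *v w))"
      using sym_dot[OF Qm_sym[of U]] unfolding M_def Q_def by (simp add: mv_assoc)
    also have "\<dots> = 0" unfolding Q_def using Qm_Y[OF UU Yeq] by simp
    finally show ?thesis .
  qed
  have "dim (range ((*v) Y) \<union> range ((*v) M)) = dim (range ((*v) Y)) + dim (range ((*v) M))"
    by (rule dim_orthogonal_sum) (use orth in blast)
  moreover have "dim (range ((*v) Y) \<union> range ((*v) M)) \<le> dim (range ((*v) R))"
    by (rule dim_subset) (use r1 r2 in blast)
  ultimately have "dim (range ((*v) M)) = 0" using rkY rkR unfolding rank_dim_range by simp
  hence "range ((*v) M) \<subseteq> {0}" by (simp add: dim_eq_0)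
  hence "M = 0" unfolding matrix_eq by auto
  thus ?thesis using G unfolding M_def Q_def by simp
qed


(* ---- Fh ---- *)


lemma lap_sym: fixes X :: "real^'n::finite^'n"
  assumes "transpose X = X" shows "transpose (laplacian X) = laplacian X"
proof -
  have "X$j$i = X$i$j" for i j using assms by (metis transpose_def vec_lambda_beta)
  thus ?thesis unfolding laplacian_def by (simp add: vec_eq_iff transpose_def)
qed

lemma lap_diff: fixes W E E' :: "real^'n::finite^'n"
  shows "laplacian (W + c *\<^sub>R E) - laplacian (W + c *\<^sub>R E') = laplacian (c *\<^sub>R (E - E'))"
  unfolding laplacian_def
  by (simp add: vec_eq_iff sum.distrib sum_subtractf algebra_simps sum_distrib_left)

lemma PiS_diff: "PiS Es X - PiS Es Y = PiS Es (X - Y)"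
  unfolding PiS_def by (simp add: vec_eq_iff)

lemma lap_bound: fixes c :: real
  shows "\<exists>K>0. \<forall>X::real^'n::finite^'n. norm (laplacian (c *\<^sub>R PiS Es X)) \<le> K * norm X"
proof -
  have l1: "linear (laplacian :: real^'n^'n \<Rightarrow> _)"
    by (rule linearI) (simp_all add: laplacian_def vec_eq_iff sum.distrib algebra_simps sum_distrib_left)
  have l2: "linear (PiS Es :: real^'n^'n \<Rightarrow> _)"
    by (rule linearI) (simp_all add: PiS_def vec_eq_iff)
  have l3: "linear (\<lambda>X::real^'n^'n. c *\<^sub>R X)" by (rule linear_scaleR)
  have lin: "linear (\<lambda>X::real^'n^'n. laplacian (c *\<^sub>R PiS Es X))"
    using linear_compose[OF linear_compose[OF l2 l3] l1] by (simp add: o_def)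
  hence "bounded_linear (\<lambda>X::real^'n^'n. laplacian (c *\<^sub>R PiS Es X))"
    by (rule linear_conv_bounded_linear[THEN iffD1])
  then obtain K where "K > 0" "\<forall>X. norm (laplacian (c *\<^sub>R PiS Es X)) \<le> norm X * K"
    using bounded_linear.pos_bounded by blast
  thus ?thesis by (metis mult.commute)
qed

lemma zvec_sign: assumes "s = 1 \<or> s = -1" "t = 1 \<or> t = -1"
  shows "zvec (s *\<^sub>R x) (t *\<^sub>R y) = zvec x y"
  using assms unfolding zvec_def by (auto simp: vec_eq_iff)

lemma norm_sign: assumes "s = 1 \<or> s = -1" shows "norm (s *\<^sub>R x - y) = norm (x - s *\<^sub>R y)"
  using assms by (auto simp: norm_minus_commute add.commute)

lemma zvec_diff: fixes a b c d :: "real^'n::finite"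
  assumes "norm a = 1" "norm b = 1" "norm c = 1" "norm d = 1"
  shows "norm (zvec a b - zvec c d) \<le> 2 * norm (a - c) + 2 * norm (b - d)"
proof -
  have eq: "zvec a b - zvec c d = (\<chi> i. (a - c)$i * (a + c)$i) - (\<chi> i. (b - d)$i * (b + d)$i)"
    unfolding zvec_def by (simp add: vec_eq_iff algebra_simps)
  have "norm (zvec a b - zvec c d) \<le> norm (\<chi> i. (a - c)$i * (a + c)$i) + norm (\<chi> i. (b - d)$i * (b + d)$i)"
    unfolding eq by (rule norm_triangle_ineq4)
  also have "\<dots> \<le> norm (a - c) * norm (a + c) + norm (b - d) * norm (b + d)"
    by (intro add_mono norm_hadamard)
  also have "\<dots> \<le> norm (a - c) * 2 + norm (b - d) * 2"
  proof (intro add_mono mult_left_mono)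
    show "norm (a + c) \<le> 2" using norm_triangle_ineq[of a c] assms by simp
    show "norm (b + d) \<le> 2" using norm_triangle_ineq[of b d] assms by simp
  qed auto
  finally show ?thesis by simp
qed

lemma sandwich_bound: fixes Q :: "real^'n::finite^'n"
  assumes "transpose Q = Q"
  shows "norm (Q ** Rform x y ** Q) \<le> norm (Q *v zvec x y) * norm (Q *v one_vec) + (norm (Q *v x))^2 + (norm (Q *v y))^2"
proof -
  have "Q ** Rform x y ** Q = (1/2) *\<^sub>R (outer (Q *v zvec x y) (Q *v one_vec) + outer (Q *v one_vec) (Q *v zvec x y))
      - outer (Q *v x) (Q *v x) + outer (Q *v y) (Q *v y)"
    unfolding Rform_def by (simp add: sandwich_add sandwich_diff sandwich_scale sandwich_outer[OF assms])
  also have "norm \<dots> \<le> (1/2) * (norm (Q *v zvec x y) * norm (Q *v one_vec) + norm (Q *v one_vec) * norm (Q *v zvec x y))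
      + norm (Q *v x) * norm (Q *v x) + norm (Q *v y) * norm (Q *v y)"
  proof -
    have "norm ((1/2) *\<^sub>R (outer (Q *v zvec x y) (Q *v one_vec) + outer (Q *v one_vec) (Q *v zvec x y)))
       \<le> (1/2) * (norm (Q *v zvec x y) * norm (Q *v one_vec) + norm (Q *v one_vec) * norm (Q *v zvec x y))"
    proof -
      have "norm (outer (Q *v zvec x y) (Q *v one_vec) + outer (Q *v one_vec) (Q *v zvec x y))
         \<le> norm (Q *v zvec x y) * norm (Q *v one_vec) + norm (Q *v one_vec) * norm (Q *v zvec x y)"
        by (rule order_trans[OF norm_triangle_ineq], intro add_mono norm_outer)
      thus ?thesis by simp
    qed
    moreover have "norm (outer (Q *v x) (Q *v x)) \<le> norm (Q *v x) * norm (Q *v x)" by (rule norm_outer)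
    moreover have "norm (outer (Q *v y) (Q *v y)) \<le> norm (Q *v y) * norm (Q *v y)" by (rule norm_outer)
    ultimately show ?thesis
      by (smt (verit) norm_triangle_ineq norm_triangle_ineq4)
  qed
  also have "\<dots> = norm (Q *v zvec x y) * norm (Q *v one_vec) + (norm (Q *v x))^2 + (norm (Q *v y))^2"
    by (simp add: power2_eq_square algebra_simps)
  finally show ?thesis .
qed


(* ---- Mn ---- *)


lemma symm_comb: fixes X Y :: "real^'n::finite^'n"
  assumes "transpose X = X" "transpose Y = Y" shows "transpose (X + c *\<^sub>R Y) = X + c *\<^sub>R Y"
proof -
  have "X$j$i = X$i$j" "Y$j$i = Y$i$j" for i j using assms by (metis transpose_def vec_lambda_beta)+
  thus ?thesis by (simp add: transpose_def vec_eq_iff)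
qed

lemma Q_sign_bound:
  fixes Q Y Yh :: "real^'n::finite^'n"
  assumes Qn: "\<And>u. norm (Q *v u) \<le> norm u" and QY: "\<And>u. Q *v (Yh *v u) = 0"
    and s: "s = 1 \<or> s = -1" and vs: "vs = Y *v w"
  shows "norm (Q *v v) \<le> norm (v - s *\<^sub>R vs) + norm (Yh - Y) * norm w"
proof -
  have "norm (Q *v v) = norm (Q *v (s *\<^sub>R v))" using s by (auto simp: matrix_vector_mult_scaleR)
  also have "Q *v (s *\<^sub>R v) = Q *v (s *\<^sub>R v - vs) - Q *v ((Yh - Y) *v w)"
    using QY[of w] by (simp add: vs matrix_vector_mult_diff_distrib matrix_vector_mult_diff_rdistrib)
  also have "norm \<dots> \<le> norm (Q *v (s *\<^sub>R v - vs)) + norm (Q *v ((Yh - Y) *v w))"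
    by (rule norm_triangle_ineq4)
  also have "\<dots> \<le> norm (s *\<^sub>R v - vs) + norm ((Yh - Y) *v w)" by (intro add_mono Qn)
  also have "\<dots> \<le> norm (v - s *\<^sub>R vs) + norm (Yh - Y) * norm w"
    using norm_sign[OF s, of v vs] norm_mv[of "Yh - Y" w] by simp
  finally show ?thesis .
qed

theorem lemma4p4:
  fixes Es :: "('n::finite \<times> 'n) set" and W Ystar :: "'n mat"
    and k :: nat and \<epsilon> :: real
  assumes Es_sym: "\<forall>i j. (i, j) \<in> Es \<longrightarrow> (j, i) \<in> Es"
    and W_sym: "symm W"
    and W_nonneg: "\<forall>i j. W$i$j \<ge> 0"
    and W_pattern: "\<forall>i j. (i, j) \<notin> Es \<longrightarrow> W$i$j = 0"
    and k_range: "2 \<le> k" "k \<le> CARD('n) - 1"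
    and eps_pos: "\<epsilon> > 0"
    and Ystar_sym: "symm Ystar"
    and Ystar_rank: "rank Ystar = 4"
    and stationary: "ode_rhs Es k W \<epsilon> Ystar = 0"
    and Estar_unit: "PiS Es Ystar \<in> calE1 Es"
    and simple_k: "simple_eig (laplacian (W + \<epsilon> *\<^sub>R PiS Es Ystar)) k"
    and simple_k1: "simple_eig (laplacian (W + \<epsilon> *\<^sub>R PiS Es Ystar)) (k + 1)"
    and R_rank: "rank (Rmat k W \<epsilon> (PiS Es Ystar)) = 4"
    and PR_nonzero: "PY Ystar (Rmat k W \<epsilon> (PiS Es Ystar)) \<noteq> 0"
  shows "\<exists>\<delta>s > 0. \<exists>C > 0. \<forall>Yh :: 'n mat.
           symm Yh \<and> rank Yh = 4 \<and> frob_norm (Yh - Ystar) < \<delta>s \<and> PiS Es Yh \<in> calE1 Es \<longrightarrow>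
           frob_norm (PY Yh (Rmat k W \<epsilon> (PiS Es Yh)) - Rmat k W \<epsilon> (PiS Es Yh))
             \<le> C * (frob_norm (Yh - Ystar))\<^sup>2"
proof -
  define Estar where "Estar = PiS Es Ystar"
  define Astar where "Astar = laplacian (W + \<epsilon> *\<^sub>R Estar)"
  have symE: "transpose Estar = Estar" using Estar_unit unfolding Estar_def calE1_def symm_def by simp
  have symW: "transpose W = W" using W_sym unfolding symm_def .
  have symYs: "transpose Ystar = Ystar" using Ystar_sym unfolding symm_def .
  have symA: "transpose Astar = Astar" unfolding Astar_def by (intro lap_sym symm_comb symW symE)
  have n1: "1 \<le> k" "k \<le> CARD('n)" "1 \<le> k+1" "k+1 \<le> CARD('n)" using k_range by auto
  have sp1: "count (eig_mset Astar) (lam Astar (k+1)) = 1"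
    using simple_k1 unfolding simple_eig_def Astar_def Estar_def .
  have sp2: "count (eig_mset Astar) (lam Astar k) = 1"
    using simple_k unfolding simple_eig_def Astar_def Estar_def .
  obtain g1 where g1: "g1 > 0" and G1: "\<And>C \<eta>. transpose C = C \<Longrightarrow> (\<forall>v. norm ((C - Astar) *v v) \<le> \<eta> * norm v) \<Longrightarrow>
     0 \<le> \<eta> \<Longrightarrow> \<eta> \<le> g1/4 \<Longrightarrow> norm (xsel C (k+1)) = 1 \<and>
     (\<exists>s::real. (s = 1 \<or> s = -1) \<and> norm (xsel C (k+1) - s *\<^sub>R xsel Astar (k+1)) \<le> (8/g1) * \<eta>)"
    using ev_perturb[OF symA n1(3,4) sp1] by blast
  obtain g2 where g2: "g2 > 0" and G2: "\<And>C \<eta>. transpose C = C \<Longrightarrow> (\<forall>v. norm ((C - Astar) *v v) \<le> \<eta> * norm v) \<Longrightarrow>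
     0 \<le> \<eta> \<Longrightarrow> \<eta> \<le> g2/4 \<Longrightarrow> norm (xsel C k) = 1 \<and>
     (\<exists>s::real. (s = 1 \<or> s = -1) \<and> norm (xsel C k - s *\<^sub>R xsel Astar k) \<le> (8/g2) * \<eta>)"
    using ev_perturb[OF symA n1(1,2) sp2] by blast
  obtain K where K: "K > 0" "\<And>X::real^'n^'n. norm (laplacian (\<epsilon> *\<^sub>R PiS Es X)) \<le> K * norm X"
    using lap_bound[of \<epsilon> Es] by blast
  define xs where "xs = xsel Astar (k+1)"
  define ys where "ys = xsel Astar k"
  have xs1: "norm xs = 1" unfolding xs_def
    using G1[of Astar 0] symA g1 by simp
  have ys1: "norm ys = 1" unfolding ys_def
    using G2[of Astar 0] symA g2 by simp
  define Rstar where "Rstar = Rmat k W \<epsilon> Estar"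
  have Rs: "Rstar = Rform xs ys" unfolding Rstar_def Rmat_eq xs_def ys_def Astar_def ..
  obtain Ss where UUs: "transpose (Usel Ystar) ** Usel Ystar = mat 1"
    and Ys: "Ystar = Usel Ystar ** Ss ** transpose (Usel Ystar)"
    using Usel_props[OF symYs Ystar_rank] by blast
  define G where "G = PY Ystar Rstar"
  define \<gamma> where "\<gamma> = frob_inner G Estar"
  have "- G + \<gamma> *\<^sub>R Ystar = 0" using stationary
    unfolding ode_rhs_def Let_def G_def \<gamma>_def Rstar_def Estar_def .
  hence Gg: "G = \<gamma> *\<^sub>R Ystar" by (simp add: algebra_simps)
  have g0: "\<gamma> \<noteq> 0" using PR_nonzero Gg unfolding G_def Rstar_def Estar_def by auto
  have "Rstar - Qm (Usel Ystar) ** Rstar ** Qm (Usel Ystar) = \<gamma> *\<^sub>R Ystar"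
    using Gg unfolding G_def PY_eq .
  moreover have rkR: "rank Rstar = 4" using R_rank unfolding Rstar_def Estar_def .
  ultimately have Rg: "Rstar = \<gamma> *\<^sub>R Ystar"
    using star_R[OF UUs Ys Ystar_rank rkR _ g0] by blast
  have inrange: "\<exists>w. v = Ystar *v w" if "v \<in> {zvec xs ys, one_vec, xs, ys}" for v
  proof -
    have "v \<in> range ((*v) Rstar)" using Rform_range[of xs ys] R_rank that
      unfolding Rs[symmetric] Rstar_def Estar_def by blast
    then obtain u where "v = Rstar *v u" by blast
    hence "v = Ystar *v (\<gamma> *\<^sub>R u)" unfolding Rg
      by (simp add: matrix_vector_mult_scaleR scaleR_matrix_vector_assoc[symmetric])
    thus ?thesis by blast
  qed
  obtain wz where wz: "zvec xs ys = Ystar *v wz" using inrange by blast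
  obtain w1 where w1: "one_vec = Ystar *v w1" using inrange by blast
  obtain wx where wx: "xs = Ystar *v wx" using inrange by blast
  obtain wy where wy: "ys = Ystar *v wy" using inrange by blast
  define a1 where "a1 = (8/g1) * K"
  define a2 where "a2 = (8/g2) * K"
  define cx where "cx = a1 + norm wx"
  define cy where "cy = a2 + norm wy"
  define c1 where "c1 = norm w1"
  define cz where "cz = 2*a1 + 2*a2 + norm wz"
  define C where "C = cz * c1 + cx^2 + cy^2 + 1"
  define \<delta>s where "\<delta>s = min g1 g2 / (4*K)"
  have a1p: "a1 \<ge> 0" "a2 \<ge> 0" unfolding a1_def a2_def using g1 g2 K by auto
  have cpos: "cx \<ge> 0" "cy \<ge> 0" "c1 \<ge> 0" "cz \<ge> 0" unfolding cx_def cy_def c1_def cz_def using a1p by auto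
  have Cpos: "C > 0" unfolding C_def using cpos by (simp add: add_nonneg_pos)
  have dpos: "\<delta>s > 0" unfolding \<delta>s_def using g1 g2 K by simp
  show ?thesis
  proof (rule exI[of _ \<delta>s], rule conjI[OF dpos], rule exI[of _ C], rule conjI[OF Cpos], intro allI impI)
    fix Yh :: "'n mat"
    assume H: "symm Yh \<and> rank Yh = 4 \<and> frob_norm (Yh - Ystar) < \<delta>s \<and> PiS Es Yh \<in> calE1 Es"
    define \<delta> where "\<delta> = norm (Yh - Ystar)"
    have d0: "\<delta> \<ge> 0" unfolding \<delta>_def by simp
    have dlt: "\<delta> < \<delta>s" using H unfolding \<delta>_def frob_eq by simp
    define Eh where "Eh = PiS Es Yh"
    define Ah where "Ah = laplacian (W + \<epsilon> *\<^sub>R Eh)"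
    have symYh: "transpose Yh = Yh" using H unfolding symm_def by simp
    have symEh: "transpose Eh = Eh" using H unfolding Eh_def calE1_def symm_def by simp
    have symAh: "transpose Ah = Ah" unfolding Ah_def by (intro lap_sym symm_comb symW symEh)
    have AhA: "Ah - Astar = laplacian (\<epsilon> *\<^sub>R PiS Es (Yh - Ystar))"
      unfolding Ah_def Astar_def Eh_def Estar_def lap_diff PiS_diff ..
    have pert: "\<forall>v. norm ((Ah - Astar) *v v) \<le> (K * \<delta>) * norm v"
    proof
      fix v
      have "norm ((Ah - Astar) *v v) \<le> norm (Ah - Astar) * norm v" by (rule norm_mv)
      also have "\<dots> \<le> (K * \<delta>) * norm v" unfolding AhA \<delta>_def by (intro mult_right_mono K(2)) simp
      finally show "norm ((Ah - Astar) *v v) \<le> (K * \<delta>) * norm v" .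
    qed
    have Kd0: "0 \<le> K * \<delta>" using K d0 by simp
    have Kdg: "K * \<delta> \<le> g1/4" "K * \<delta> \<le> g2/4"
    proof -
      have "K * \<delta> \<le> K * \<delta>s" using dlt K by simp
      also have "K * \<delta>s = min g1 g2 / 4" unfolding \<delta>s_def using K by simp
      finally show "K * \<delta> \<le> g1/4" "K * \<delta> \<le> g2/4" by auto
    qed
    define xh where "xh = xsel Ah (k+1)"
    define yh where "yh = xsel Ah k"
    obtain s1 where xh1: "norm xh = 1" and s1: "s1 = 1 \<or> s1 = -1" and xb: "norm (xh - s1 *\<^sub>R xs) \<le> a1 * \<delta>"
      using G1[OF symAh pert Kd0 Kdg(1)] unfolding xh_def xs_def a1_def by (auto simp: mult.assoc)
    obtain s2 where yh1: "norm yh = 1" and s2: "s2 = 1 \<or> s2 = -1" and yb: "norm (yh - s2 *\<^sub>R ys) \<le> a2 * \<delta>"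
      using G2[OF symAh pert Kd0 Kdg(2)] unfolding yh_def ys_def a2_def by (auto simp: mult.assoc)
    obtain Sh where UUh: "transpose (Usel Yh) ** Usel Yh = mat 1"
      and Yhe: "Yh = Usel Yh ** Sh ** transpose (Usel Yh)"
      using Usel_props[OF symYh] H by blast
    define Q where "Q = Qm (Usel Yh)"
    have Qn: "\<And>u. norm (Q *v u) \<le> norm u" unfolding Q_def by (rule Qm_norm[OF UUh])
    have QY: "\<And>u. Q *v (Yh *v u) = 0" unfolding Q_def by (rule Qm_Y(1)[OF UUh Yhe])
    have Qs: "transpose Q = Q" unfolding Q_def by (rule Qm_sym)
    have one1: "(1::real) = 1 \<or> (1::real) = -1" by simp
    have bx: "norm (Q *v xh) \<le> cx * \<delta>"
      using Q_sign_bound[OF Qn QY s1 wx, of xh] xb unfolding cx_def \<delta>_def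
      by (simp add: algebra_simps)
    have by': "norm (Q *v yh) \<le> cy * \<delta>"
      using Q_sign_bound[OF Qn QY s2 wy, of yh] yb unfolding cy_def \<delta>_def
      by (simp add: algebra_simps)
    have b1: "norm (Q *v one_vec) \<le> c1 * \<delta>"
      using Q_sign_bound[OF Qn QY one1 w1, of one_vec] unfolding c1_def \<delta>_def
      by (simp add: algebra_simps)
    have zd: "norm (zvec xh yh - zvec xs ys) \<le> 2 * (a1 * \<delta>) + 2 * (a2 * \<delta>)"
    proof -
      have e: "zvec xh yh = zvec (s1 *\<^sub>R xh) (s2 *\<^sub>R yh)" using zvec_sign[OF s1 s2, of xh yh] by simp
      have "norm (zvec (s1 *\<^sub>R xh) (s2 *\<^sub>R yh) - zvec xs ys)
          \<le> 2 * norm (s1 *\<^sub>R xh - xs) + 2 * norm (s2 *\<^sub>R yh - ys)"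
        by (rule zvec_diff) (use s1 s2 xh1 yh1 xs1 ys1 in auto)
      moreover have "norm (s1 *\<^sub>R xh - xs) = norm (xh - s1 *\<^sub>R xs)" by (rule norm_sign[OF s1])
      moreover have "norm (s2 *\<^sub>R yh - ys) = norm (yh - s2 *\<^sub>R ys)" by (rule norm_sign[OF s2])
      ultimately show ?thesis using xb yb unfolding e[symmetric] by linarith
    qed
    have bz: "norm (Q *v zvec xh yh) \<le> cz * \<delta>"
    proof -
      have "norm (Q *v zvec xh yh) \<le> norm (zvec xh yh - 1 *\<^sub>R zvec xs ys) + norm (Yh - Ystar) * norm wz"
        by (rule Q_sign_bound[OF Qn QY one1 wz])
      thus ?thesis using zd unfolding cz_def \<delta>_def by (simp add: algebra_simps)
    qed
    have Rh: "Rmat k W \<epsilon> (PiS Es Yh) = Rform xh yh"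
      unfolding Rmat_eq xh_def yh_def Ah_def Eh_def ..
    have "frob_norm (PY Yh (Rmat k W \<epsilon> (PiS Es Yh)) - Rmat k W \<epsilon> (PiS Es Yh))
        = norm (Q ** Rform xh yh ** Q)"
      unfolding frob_eq PY_eq Rh Q_def by (simp add: norm_minus_commute)
    also have "\<dots> \<le> norm (Q *v zvec xh yh) * norm (Q *v one_vec) + (norm (Q *v xh))^2 + (norm (Q *v yh))^2"
      by (rule sandwich_bound[OF Qs])
    also have "\<dots> \<le> (cz * \<delta>) * (c1 * \<delta>) + (cx * \<delta>)^2 + (cy * \<delta>)^2"
    proof (intro add_mono mult_mono power_mono)
    qed (use bz b1 bx by' cpos d0 in auto)
    also have "\<dots> \<le> C * \<delta>^2" unfolding C_def by (simp add: power2_eq_square algebra_simps)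
    finally show "frob_norm (PY Yh (Rmat k W \<epsilon> (PiS Es Yh)) - Rmat k W \<epsilon> (PiS Es Yh))
             \<le> C * (frob_norm (Yh - Ystar))\<^sup>2" unfolding frob_eq \<delta>_def .
  qed
qed


end
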